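(* Let $\{M_p\mid p\in P\}$ be a Morse decomposition of a multivector field on a finite simplicial complex $K$, with associated $P$-filtered chain complex $(C,d)$, and let $f:K\to\mathbb R$ be Lyapunov for this Morse decomposition. Let $P_f$ and $P'_f$ be two $f$-compatible orders of $P$, and let $(\bar C,\bar d)$ and $(\bar C',\bar d')$ be Conley complexes of $(C,d)$. Then $\mathrm{pers}(H(\bar{\mathbf C},P_f))=\mathrm{pers}(H(\mathbf F,P_f))=\mathrm{pers}(H(\mathbf F',P'_f))=\mathrm{pers}(H(\bar{\mathbf C}',P'_f))$.
   Context: $K$ is a finite simplicial complex; a multivector field $\mathcal V$ on $K$ is a partition of $K$ into convex sets $V$ (if $\sigma,\tau\in V$ and $\sigma\le\mu\le\tau$ in the face order then $\mu\in V$); $F_{\mathcal V}(\sigma)=[\sigma]_{\mathcal V}\cup\{\tau:\tau\le\sigma\}$ where $[\sigma]_{\mathcal V}$ is the part containing $\sigma$; a path is a sequence $\sigma_1,\dots,\sigma_r$ with $\sigma_k\in F_{\mathcal V}(\sigma_{k-1})$. A Morse decomposition indexed by a finite poset $(P,\le_P)$ is a partition $K=\bigsqcup_{p\in P}M_p$ such that every path from $M_p$ to $M_q$ has $q\le_P p$. Let $m=|P|$. $(C,d)$: $C_p$ is the $\mathbb Z_2$-span of the simplices in $M_p$ (graded by dimension), $C=\bigoplus_pC_p$ the simplicial chains of $K$ over $\mathbb Z_2$, $d$ the simplicial boundary. For $P$-graded spaces and a linear map $h$, $h_{pq}=\pi_p h\iota_q$, and $h$ is $P$-filtered if $h_{pq}\ne0\Rightarrow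 p\le_P q$. A $P$-filtered chain complex is a $\mathbb Z_2$ chain complex with a $P$-gradation (compatible with degree) whose differential is $P$-filtered. Filtered chain maps are $P$-filtered chain maps; filtered chain maps $\varphi,\psi$ are filtered chain homotopic if $\psi-\varphi=d'S+Sd$ for some $P$-filtered degree-raising-by-one linear $S$; two $P$-filtered complexes are filtered chain homotopic if there are filtered chain maps $\varphi,\varphi'$ between them with $\varphi'\varphi$ and $\varphi\varphi'$ filtered chain homotopic to the identities. A Conley complex of $(C,d)$ is a $P$-filtered chain complex $(\bar C,\bar d)$ filtered chain homotopic to $(C,d)$ with $\bar d_{pp}=0$ for all $p$. $f:K\to\mathbb R$ is Lyapunov (for the Morse decomposition) if $f$ is constant on each $M_p$, with value denoted $f(p)$, and $p\le_P q$ implies $f(p)\le f(q)$. An $f$-compatible order $P_f$ is an enumeration $p_1,\dots,p_m$ of $P$ that is a linear extension of $\le_P$ with $f(p_1)\le\dots\le f(p_m)$. For a $P$-filtered chain complex $(D,\delta)$, set $\mathbf D_{p_i}=\bigoplus_{j\le i}D_{p_j}$ (a subcomplex) and let $H(\mathbf D,P_f)$ be the persistence module $H_*(\mathbf D_{p_1})\to\dots\to H_*(\mathbf D_{p_m})$ with inclusion-induced maps. $K_i=\bigsqcup_{j\le i}M_{p_j}$ is a subcomplex of $K$ and $H(\mathbf F,P_f)$ is $H_*(C(K_1))\to\dots\to H_*(C(K_m))$ with inclusion-induced maps, $C(K_i)$ the simplicial chains of $K_i$ over $\mathbb Z_2$; $\mathbf F'$, $\bar{\mathbf C}'$ denote the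 same constructions for $P'_f$ and $(\bar C',\bar d')$. For such a module $V_1\to\dots\to V_m$ indexed by $P_f$, $\mathrm{pers}$ is the persistence diagram: decompose each homological degree into interval modules $[a,b]$, $1\le a\le b\le m$, and record for each the point $(f(p_a),f(p_{b+1}))$ with $f(p_{m+1}):=+\infty$, discarding points with $f(p_a)=f(p_{b+1})$; the result is a multiset of points per degree. *)

theory Defs
  imports Main "HOL-Library.Multiset" "HOL-Library.Extended_Real"
begin

definition simplicial_complex :: "'v set set \<Rightarrow> bool" where
  "simplicial_complex K \<longleftrightarrow> finite K \<and>
     (\<forall>\<sigma>\<in>K. finite \<sigma> \<and> \<sigma> \<noteq> {}) \<and>
     (\<forall>\<sigma>\<in>K. \<forall>\<tau>. \<tau> \<subseteq> \<sigma> \<and> \<tau> \<noteq> {} \<longrightarrow> \<tau> \<in> K)"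

definition convex_in :: "'v set set \<Rightarrow> 'v set set \<Rightarrow> bool" where
  "convex_in K V \<longleftrightarrow> (\<forall>\<sigma>\<in>V. \<forall>\<tau>\<in>V. \<forall>\<mu>\<in>K. \<sigma> \<subseteq> \<mu> \<and> \<mu> \<subseteq> \<tau> \<longrightarrow> \<mu> \<in> V)"

definition multivector_field :: "'v set set \<Rightarrow> 'v set set set \<Rightarrow> bool" where
  "multivector_field K \<V> \<longleftrightarrow>
     (\<forall>V\<in>\<V>. V \<noteq> {} \<and> V \<subseteq> K \<and> convex_in K V) \<and>
     (\<forall>V\<in>\<V>. \<forall>W\<in>\<V>. V \<noteq> W \<longrightarrow> V \<inter> W = {}) \<and>
     \<Union>\<V> = K"

definition mvpart :: "'v set set set \<Rightarrow> 'v set \<Rightarrow> 'v set set" where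
  "mvpart \<V> \<sigma> = (THE V. V \<in> \<V> \<and> \<sigma> \<in> V)"

definition Fmv :: "'v set set \<Rightarrow> 'v set set set \<Rightarrow> 'v set \<Rightarrow> 'v set set" where
  "Fmv K \<V> \<sigma> = mvpart \<V> \<sigma> \<union> {\<tau>\<in>K. \<tau> \<subseteq> \<sigma>}"

definition mv_path :: "'v set set \<Rightarrow> 'v set set set \<Rightarrow> 'v set list \<Rightarrow> bool" where
  "mv_path K \<V> xs \<longleftrightarrow> xs \<noteq> [] \<and> set xs \<subseteq> K \<and>
     (\<forall>i. Suc i < length xs \<longrightarrow> xs ! Suc i \<in> Fmv K \<V> (xs ! i))"

definition partial_order_on_set :: "'p set \<Rightarrow> ('p \<Rightarrow> 'p \<Rightarrow> bool) \<Rightarrow> bool" where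
  "partial_order_on_set P le \<longleftrightarrow>
     (\<forall>p\<in>P. le p p) \<and>
     (\<forall>p\<in>P. \<forall>q\<in>P. le p q \<and> le q p \<longrightarrow> p = q) \<and>
     (\<forall>p\<in>P. \<forall>q\<in>P. \<forall>r\<in>P. le p q \<and> le q r \<longrightarrow> le p r)"

definition morse_decomposition ::
  "'v set set \<Rightarrow> 'v set set set \<Rightarrow> 'p set \<Rightarrow> ('p \<Rightarrow> 'p \<Rightarrow> bool) \<Rightarrow> ('p \<Rightarrow> 'v set set) \<Rightarrow> bool" where
  "morse_decomposition K \<V> P le M \<longleftrightarrow>
     finite P \<and> partial_order_on_set P le \<and>
     (\<forall>p\<in>P. M p \<subseteq> K) \<and>
     (\<forall>p\<in>P. \<forall>q\<in>P. p \<noteq> q \<longrightarrow> M p \<inter> M q = {}) \<and>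
     (\<Union>p\<in>P. M p) = K \<and>
     (\<forall>xs p q. mv_path K \<V> xs \<and> p \<in> P \<and> q \<in> P \<and> hd xs \<in> M p \<and> last xs \<in> M q \<longrightarrow> le q p)"

text \<open>A Z2-vector space is represented by a basis (set of generators); a vector is a
  finite set of generators (its support), addition is symmetric difference.  A linear map is
  given by the images of the generators.\<close>

record ('g, 'p) fcc =
  gens :: "'g set"
  deg  :: "'g \<Rightarrow> int"
  grd  :: "'g \<Rightarrow> 'p"
  bdry :: "'g \<Rightarrow> 'g set"

text \<open>Linear extension over Z2 of a map given on generators.\<close>
definition lin :: "('a \<Rightarrow> 'b set) \<Rightarrow> 'a set \<Rightarrow> 'b set" where
  "lin \<phi> c = {h. odd (card {g\<in>c. h \<in> \<phi> g})}"

definition sdiff :: "'a set \<Rightarrow> 'a set \<Rightarrow> 'a set" where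
  "sdiff A B = (A - B) \<union> (B - A)"

definition is_fcc :: "'p set \<Rightarrow> ('p \<Rightarrow> 'p \<Rightarrow> bool) \<Rightarrow> ('g, 'p, 'z) fcc_scheme \<Rightarrow> bool" where
  "is_fcc P le D \<longleftrightarrow>
     (\<forall>g\<in>gens D. grd D g \<in> P \<and> finite (bdry D g) \<and> bdry D g \<subseteq> gens D \<and>
        (\<forall>h\<in>bdry D g. deg D h = deg D g - 1 \<and> le (grd D h) (grd D g)) \<and>
        lin (bdry D) (bdry D g) = {})"

definition fmap :: "('p \<Rightarrow> 'p \<Rightarrow> bool) \<Rightarrow> int \<Rightarrow> ('g, 'p, 'z) fcc_scheme \<Rightarrow> ('h, 'p, 'y) fcc_scheme
                    \<Rightarrow> ('g \<Rightarrow> 'h set) \<Rightarrow> bool" where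
  "fmap le k D E \<phi> \<longleftrightarrow>
     (\<forall>g\<in>gens D. finite (\<phi> g) \<and> \<phi> g \<subseteq> gens E \<and>
        (\<forall>h\<in>\<phi> g. deg E h = deg D g + k \<and> le (grd E h) (grd D g)))"

definition fchain_map :: "('p \<Rightarrow> 'p \<Rightarrow> bool) \<Rightarrow> ('g, 'p, 'z) fcc_scheme \<Rightarrow> ('h, 'p, 'y) fcc_scheme
                    \<Rightarrow> ('g \<Rightarrow> 'h set) \<Rightarrow> bool" where
  "fchain_map le D E \<phi> \<longleftrightarrow> fmap le 0 D E \<phi> \<and>
     (\<forall>g\<in>gens D. lin (bdry E) (\<phi> g) = lin \<phi> (bdry D g))"

text \<open>Filtered chain homotopy: \<open>\<psi> - \<phi> = d' S + S d\<close> (over Z2, minus is symmetric difference).\<close>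
definition fhomotopic :: "('p \<Rightarrow> 'p \<Rightarrow> bool) \<Rightarrow> ('g, 'p, 'z) fcc_scheme \<Rightarrow> ('h, 'p, 'y) fcc_scheme
                    \<Rightarrow> ('g \<Rightarrow> 'h set) \<Rightarrow> ('g \<Rightarrow> 'h set) \<Rightarrow> bool" where
  "fhomotopic le D E \<phi> \<psi> \<longleftrightarrow> fchain_map le D E \<phi> \<and> fchain_map le D E \<psi> \<and>
     (\<exists>S. fmap le 1 D E S \<and>
        (\<forall>g\<in>gens D. sdiff (\<psi> g) (\<phi> g) = sdiff (lin (bdry E) (S g)) (lin S (bdry D g))))"

definition fhtpy_equivalent :: "('p \<Rightarrow> 'p \<Rightarrow> bool) \<Rightarrow> ('g, 'p, 'z) fcc_scheme \<Rightarrow> ('h, 'p, 'y) fcc_scheme \<Rightarrow> bool" where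
  "fhtpy_equivalent le D E \<longleftrightarrow>
     (\<exists>\<phi> \<phi>'. fchain_map le D E \<phi> \<and> fchain_map le E D \<phi>' \<and>
        fhomotopic le D D (\<lambda>g. lin \<phi>' (\<phi> g)) (\<lambda>g. {g}) \<and>
        fhomotopic le E E (\<lambda>h. lin \<phi> (\<phi>' h)) (\<lambda>h. {h}))"

definition morse_cc :: "'v set set \<Rightarrow> 'p set \<Rightarrow> ('p \<Rightarrow> 'v set set) \<Rightarrow> ('v set, 'p) fcc" where
  "morse_cc K P M = \<lparr> gens = K,
     deg = (\<lambda>\<sigma>. int (card \<sigma>) - 1),
     grd = (\<lambda>\<sigma>. THE p. p \<in> P \<and> \<sigma> \<in> M p),
     bdry = (\<lambda>\<sigma>. {\<tau>\<in>K. \<tau> \<subseteq> \<sigma> \<and> card \<tau> + 1 = card \<sigma>}) \<rparr>"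

definition conley_complex :: "'p set \<Rightarrow> ('p \<Rightarrow> 'p \<Rightarrow> bool) \<Rightarrow> ('v set, 'p) fcc \<Rightarrow> ('g, 'p) fcc \<Rightarrow> bool" where
  "conley_complex P le C D \<longleftrightarrow> is_fcc P le D \<and> fhtpy_equivalent le D C \<and>
     (\<forall>g\<in>gens D. \<forall>h\<in>bdry D g. grd D h \<noteq> grd D g)"

definition lyapunov ::
  "'p set \<Rightarrow> ('p \<Rightarrow> 'p \<Rightarrow> bool) \<Rightarrow> ('p \<Rightarrow> 'v set set) \<Rightarrow> ('v set \<Rightarrow> real) \<Rightarrow> ('p \<Rightarrow> real) \<Rightarrow> bool" where
  "lyapunov P le M f fP \<longleftrightarrow>
     (\<forall>p\<in>P. \<forall>\<sigma>\<in>M p. f \<sigma> = fP p) \<and>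
     (\<forall>p\<in>P. \<forall>q\<in>P. le p q \<longrightarrow> fP p \<le> fP q)"

definition compatible_order :: "'p set \<Rightarrow> ('p \<Rightarrow> 'p \<Rightarrow> bool) \<Rightarrow> ('p \<Rightarrow> real) \<Rightarrow> 'p list \<Rightarrow> bool" where
  "compatible_order P le fP ps \<longleftrightarrow> distinct ps \<and> set ps = P \<and>
     (\<forall>i<length ps. \<forall>j<length ps. le (ps ! i) (ps ! j) \<longrightarrow> i \<le> j) \<and>
     sorted (map fP ps)"

definition chains :: "('g, 'p, 'z) fcc_scheme \<Rightarrow> 'g set \<Rightarrow> int \<Rightarrow> 'g set set" where
  "chains D A n = {c. finite c \<and> c \<subseteq> A \<and> (\<forall>g\<in>c. deg D g = n)}"

definition cycles :: "('g, 'p, 'z) fcc_scheme \<Rightarrow> 'g set \<Rightarrow> int \<Rightarrow> 'g set set" where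
  "cycles D A n = {c\<in>chains D A n. lin (bdry D) c = {}}"

definition boundaries :: "('g, 'p, 'z) fcc_scheme \<Rightarrow> 'g set \<Rightarrow> int \<Rightarrow> 'g set set" where
  "boundaries D A n = lin (bdry D) ` chains D A (n + 1)"

definition zsum :: "'g set set \<Rightarrow> 'g set" where
  "zsum S = lin (\<lambda>s. s) S"

text \<open>Dimension of the quotient \<open>U / (U \<inter> W)\<close>: maximal size of a subset of \<open>U\<close>
  that is linearly independent modulo \<open>W\<close>.\<close>
definition indep_mod :: "'g set set \<Rightarrow> 'g set set \<Rightarrow> 'g set set \<Rightarrow> bool" where
  "indep_mod U W S \<longleftrightarrow> finite S \<and> S \<subseteq> U \<and> (\<forall>T\<subseteq>S. T \<noteq> {} \<longrightarrow> zsum T \<notin> W)"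

definition qdim :: "'g set set \<Rightarrow> 'g set set \<Rightarrow> nat" where
  "qdim U W = Sup {card S | S. indep_mod U W S}"

text \<open>Rank of \<open>H_n(A) \<rightarrow> H_n(B)\<close> induced by inclusion of subcomplexes spanned by \<open>A \<subseteq> B\<close>:
  the image is \<open>Z_n(A) / (Z_n(A) \<inter> B_n(B))\<close>.\<close>
definition prank :: "('g, 'p, 'z) fcc_scheme \<Rightarrow> 'g set \<Rightarrow> 'g set \<Rightarrow> int \<Rightarrow> nat" where
  "prank D A B n = qdim (cycles D A n) (boundaries D B n)"

text \<open>Persistence diagram (in degree \<open>n\<close>) of the module
  \<open>H_n(filt 1) \<rightarrow> \<dots> \<rightarrow> H_n(filt m)\<close>, stage \<open>i\<close> having value \<open>val i\<close>, \<open>val (m+1) = \<infinity>\<close>.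
  The multiplicity of the interval \<open>[a,b]\<close> is obtained from the rank invariant by
  inclusion-exclusion.\<close>
definition pers_module ::
  "('g, 'p, 'z) fcc_scheme \<Rightarrow> (nat \<Rightarrow> 'g set) \<Rightarrow> nat \<Rightarrow> (nat \<Rightarrow> ereal) \<Rightarrow> int \<Rightarrow> (ereal \<times> ereal) multiset" where
  "pers_module D filt m val n =
     (let r = (\<lambda>i j. if i = 0 \<or> m < j then (0::int) else int (prank D (filt i) (filt j) n));
          mu = (\<lambda>a b. r a b - r (a - 1) b - r a (b + 1) + r (a - 1) (b + 1))
      in \<Sum>(a, b)\<in>{(a, b). 1 \<le> a \<and> a \<le> b \<and> b \<le> m}.
           if val a = val (b + 1) then {#} else replicate_mset (nat (mu a b)) (val a, val (b + 1)))"

definition order_val :: "('p \<Rightarrow> real) \<Rightarrow> 'p list \<Rightarrow> nat \<Rightarrow> ereal" where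
  "order_val fP ps i = (if 1 \<le> i \<and> i \<le> length ps then ereal (fP (ps ! (i - 1))) else \<infinity>)"

text \<open>\<open>pers(H(\<^bold>D, P_f))\<close> for a P-filtered chain complex \<open>D\<close>: stage \<open>i\<close> is spanned by the
  generators of grades \<open>p_1, \<dots>, p_i\<close>.\<close>
definition pers_filtered :: "('g, 'p, 'z) fcc_scheme \<Rightarrow> ('p \<Rightarrow> real) \<Rightarrow> 'p list \<Rightarrow> int \<Rightarrow> (ereal \<times> ereal) multiset" where
  "pers_filtered D fP ps =
     pers_module D (\<lambda>i. {g\<in>gens D. grd D g \<in> set (take i ps)}) (length ps) (order_val fP ps)"

text \<open>\<open>pers(H(\<^bold>F, P_f))\<close>: simplicial homology of the subcomplexes
  \<open>K_i = M_{p_1} \<union> \<dots> \<union> M_{p_i}\<close>.\<close>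
definition simplicial_cc :: "'v set set \<Rightarrow> ('v set, unit) fcc" where
  "simplicial_cc K = \<lparr> gens = K, deg = (\<lambda>\<sigma>. int (card \<sigma>) - 1), grd = (\<lambda>_. ()),
     bdry = (\<lambda>\<sigma>. {\<tau>\<in>K. \<tau> \<subseteq> \<sigma> \<and> card \<tau> + 1 = card \<sigma>}) \<rparr>"

definition pers_F :: "'v set set \<Rightarrow> ('p \<Rightarrow> 'v set set) \<Rightarrow> ('p \<Rightarrow> real) \<Rightarrow> 'p list \<Rightarrow> int \<Rightarrow> (ereal \<times> ereal) multiset" where
  "pers_F K M fP ps =
     pers_module (simplicial_cc K) (\<lambda>i. \<Union>j<i. M (ps ! j)) (length ps) (order_val fP ps)"

end

theory Submission
  imports Defs
begin

lemma sdiff_empty[simp]: "sdiff a {} = a" "sdiff {} a = a" "sdiff a a = {}"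
  by (auto simp: sdiff_def)

lemma lin_empty[simp]: "lin \<phi> {} = {}"
  by (simp add: lin_def)

lemma lin_insert:
  assumes "finite c" "x \<notin> c"
  shows "lin \<phi> (insert x c) = sdiff (\<phi> x) (lin \<phi> c)"
proof -
  have "odd (card {g\<in>insert x c. h \<in> \<phi> g}) \<longleftrightarrow> (h \<in> \<phi> x) \<noteq> odd (card {g\<in>c. h \<in> \<phi> g})" for h
  proof (cases "h \<in> \<phi> x")
    case True
    then have "{g\<in>insert x c. h \<in> \<phi> g} = insert x {g\<in>c. h \<in> \<phi> g}" by auto
    moreover have "x \<notin> {g\<in>c. h \<in> \<phi> g}" using assms by auto
    moreover have "finite {g\<in>c. h \<in> \<phi> g}" using assms by auto
    ultimately show ?thesis using True by (auto dest: odd_pos)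
  next
    case False
    then have "{g\<in>insert x c. h \<in> \<phi> g} = {g\<in>c. h \<in> \<phi> g}" by auto
    then show ?thesis using False by simp
  qed
  then show ?thesis by (auto simp: lin_def sdiff_def)
qed

lemma lin_subset: "lin \<phi> c \<subseteq> \<Union>(\<phi> ` c)"
proof
  fix h assume "h \<in> lin \<phi> c"
  then have "card {g\<in>c. h \<in> \<phi> g} \<noteq> 0" by (auto simp: lin_def intro: odd_pos)
  then have "{g\<in>c. h \<in> \<phi> g} \<noteq> {}" by (metis card.empty)
  then show "h \<in> \<Union>(\<phi> ` c)" by auto
qed

lemma lin_finite: "finite c \<Longrightarrow> (\<forall>x\<in>c. finite (\<phi> x)) \<Longrightarrow> finite (lin \<phi> c)"
  by (meson finite_UN_I finite_subset lin_subset)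

lemma lin_cong: "(\<And>x. x \<in> c \<Longrightarrow> \<phi> x = \<psi> x) \<Longrightarrow> lin \<phi> c = lin \<psi> c"
  unfolding lin_def by (metis (no_types, lifting) Collect_cong)

lemma lin_single: "lin (\<lambda>g. {g}) c = c"
proof -
  have "{g\<in>c. h \<in> {g}} = (if h \<in> c then {h} else {})" for h by auto
  then show ?thesis by (auto simp: lin_def)
qed

lemma lin_sdiff:
  assumes "finite a" "finite b"
  shows "lin \<phi> (sdiff a b) = sdiff (lin \<phi> a) (lin \<phi> b)"
proof -
  have "odd (card {g\<in>sdiff a b. h \<in> \<phi> g}) \<longleftrightarrow> odd (card {g\<in>a. h \<in> \<phi> g}) \<noteq> odd (card {g\<in>b. h \<in> \<phi> g})" for h
  proof -
    define A where "A = {g\<in>a. h \<in> \<phi> g}"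
    define B where "B = {g\<in>b. h \<in> \<phi> g}"
    have fA: "finite A" "finite B" using assms by (auto simp: A_def B_def)
    have e: "{g\<in>sdiff a b. h \<in> \<phi> g} = (A - B) \<union> (B - A)"
      by (auto simp: A_def B_def sdiff_def)
    have c1: "card ((A - B) \<union> (B - A)) = card (A - B) + card (B - A)"
      using fA by (intro card_Un_disjoint) auto
    have c2: "card A = card (A - B) + card (A \<inter> B)"
    proof -
      have "A = (A - B) \<union> (A \<inter> B)" by auto
      then have "card A = card ((A - B) \<union> (A \<inter> B))" by simp
      also have "\<dots> = card (A - B) + card (A \<inter> B)" using fA by (intro card_Un_disjoint) auto
      finally show ?thesis .
    qed
    have c3: "card B = card (B - A) + card (A \<inter> B)"
    proof -
      have "B = (B - A) \<union> (A \<inter> B)" by auto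
      then have "card B = card ((B - A) \<union> (A \<inter> B))" by simp
      also have "\<dots> = card (B - A) + card (A \<inter> B)" using fA by (intro card_Un_disjoint) auto
      finally show ?thesis .
    qed
    show ?thesis unfolding e c1 A_def[symmetric] B_def[symmetric] using c2 c3 by presburger
  qed
  then show ?thesis by (auto simp: lin_def sdiff_def)
qed

lemma sdiff_assoc_comm: "sdiff (sdiff a b) (sdiff c d) = sdiff (sdiff a c) (sdiff b d)"
  "sdiff (sdiff a c) (sdiff b c) = sdiff a b"
  "sdiff a b = sdiff b a"
  "sdiff (sdiff a b) b = a"
  "sdiff a (sdiff a b) = b"
  unfolding sdiff_def by blast+


lemma finite_sdiff: "finite a \<Longrightarrow> finite b \<Longrightarrow> finite (sdiff a b)"
  by (simp add: sdiff_def)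

lemma lin_fun_sdiff:
  assumes "finite c"
  shows "lin (\<lambda>g. sdiff (\<phi> g) (\<psi> g)) c = sdiff (lin \<phi> c) (lin \<psi> c)"
  using assms
proof (induction c rule: finite_induct)
  case empty then show ?case by simp
next
  case (insert x F)
  then have "lin (\<lambda>g. sdiff (\<phi> g) (\<psi> g)) (insert x F) =
     sdiff (sdiff (\<phi> x) (\<psi> x)) (sdiff (lin \<phi> F) (lin \<psi> F))" by (simp add: lin_insert)
  also have "\<dots> = sdiff (sdiff (\<phi> x) (lin \<phi> F)) (sdiff (\<psi> x) (lin \<psi> F))"
    by (rule sdiff_assoc_comm(1))
  finally show ?case using insert by (simp add: lin_insert)
qed

lemma lin_comp:
  assumes "finite c" "\<forall>x\<in>c. finite (\<psi> x)"
  shows "lin \<phi> (lin \<psi> c) = lin (\<lambda>x. lin \<phi> (\<psi> x)) c"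
  using assms
proof (induction c rule: finite_induct)
  case empty then show ?case by simp
next
  case (insert x F)
  then have "finite (lin \<psi> F)" by (simp add: lin_finite)
  then show ?case using insert by (simp add: lin_insert lin_sdiff)
qed

lemma zsum_empty[simp]: "zsum {} = {}" by (simp add: zsum_def)

lemma zsum_insert: "finite T \<Longrightarrow> x \<notin> T \<Longrightarrow> zsum (insert x T) = sdiff x (zsum T)"
  by (simp add: zsum_def lin_insert)

lemma zsum_single[simp]: "zsum {x} = x"
  by (simp add: zsum_insert)

lemma zsum_sdiff: "finite T1 \<Longrightarrow> finite T2 \<Longrightarrow> zsum (sdiff T1 T2) = sdiff (zsum T1) (zsum T2)"
  by (simp add: zsum_def lin_sdiff)

lemma zsum_subset: "zsum T \<subseteq> \<Union>T"
  using lin_subset[of "\<lambda>s. s" T] by (simp add: zsum_def)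

definition zsub :: "'a set set \<Rightarrow> bool" where
  "zsub U \<longleftrightarrow> {} \<in> U \<and> (\<forall>a\<in>U. \<forall>b\<in>U. sdiff a b \<in> U) \<and> (\<forall>a\<in>U. finite a)"

lemma zsum_closed:
  assumes "zsub U" "finite T" "T \<subseteq> U"
  shows "zsum T \<in> U"
  using assms(2,3)
proof (induction T rule: finite_induct)
  case empty then show ?case using assms(1) by (simp add: zsub_def)
next
  case (insert x F)
  then show ?case using assms(1) by (simp add: zsum_insert zsub_def)
qed

lemma zsum_finite: "finite T \<Longrightarrow> \<forall>t\<in>T. finite t \<Longrightarrow> finite (zsum T)"
  by (simp add: zsum_def lin_finite)

lemma zsum_map:
  assumes "finite T" "\<forall>t\<in>T. finite t"
    and add: "\<And>a b. finite a \<Longrightarrow> finite b \<Longrightarrow> L (sdiff a b) = sdiff (L a) (L b)"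
    and "L {} = {}" and "inj_on L T"
  shows "L (zsum T) = zsum (L ` T)"
  using assms(1,2,5)
proof (induction T rule: finite_induct)
  case empty then show ?case using assms(4) by simp
next
  case (insert x F)
  then have "L x \<notin> L ` F" by auto
  moreover have "finite (zsum F)" using insert by (simp add: zsum_finite)
  ultimately show ?case using insert add by (simp add: zsum_insert)
qed

lemma zsub_Int: "zsub A \<Longrightarrow> zsub B \<Longrightarrow> zsub (A \<inter> B)"
  by (auto simp: zsub_def)

lemma indep_empty: "indep_mod U W {}"
  by (simp add: indep_mod_def)

lemma indep_bound:
  assumes "indep_mod U W S" "{} \<in> W" "\<forall>u\<in>U. u \<subseteq> A" "finite A"
  shows "card S \<le> card A"
proof -
  have fS: "finite S" "S \<subseteq> U" using assms(1) by (auto simp: indep_mod_def)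
  have inj: "inj_on zsum (Pow S)"
  proof
    fix T1 T2 assume T: "T1 \<in> Pow S" "T2 \<in> Pow S" "zsum T1 = zsum T2"
    have f: "finite T1" "finite T2" using T fS by (auto intro: finite_subset)
    have "zsum (sdiff T1 T2) = {}" using zsum_sdiff[OF f] T by simp
    moreover have "sdiff T1 T2 \<subseteq> S" using T by (auto simp: sdiff_def)
    ultimately have "sdiff T1 T2 = {}" using assms(1,2) unfolding indep_mod_def by metis
    then show "T1 = T2" by (auto simp: sdiff_def)
  qed
  have zA: "zsum T \<subseteq> A" if "T \<subseteq> S" for T
  proof -
    have "\<Union>T \<subseteq> A" using that fS assms(3) by blast
    then show ?thesis using zsum_subset[of T] by (rule order_trans[rotated])
  qed
  have "zsum ` Pow S \<subseteq> Pow A" using zA by auto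
  then have "card (Pow S) \<le> card (Pow A)"
    using card_inj_on_le[OF inj] assms(4) by auto
  then have "(2::nat) ^ card S \<le> 2 ^ card A" using fS assms(4) by (simp add: card_Pow)
  then show ?thesis by simp
qed

lemma qdim_fin:
  assumes bnd: "\<And>S. indep_mod U W S \<Longrightarrow> card S \<le> N"
  shows "finite {card S | S. indep_mod U W S}" "{card S | S. indep_mod U W S} \<noteq> {}"
proof -
  have "{card S | S. indep_mod U W S} \<subseteq> {..N}" using bnd by auto
  then show "finite {card S | S. indep_mod U W S}" by (rule finite_subset) simp
  show "{card S | S. indep_mod U W S} \<noteq> {}" using indep_empty by blast
qed

lemma qdim_upper:
  assumes bnd: "\<And>S. indep_mod U W S \<Longrightarrow> card S \<le> N" and S: "indep_mod U W S"
  shows "card S \<le> qdim U W"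
proof -
  have "finite {card S | S. indep_mod U W S}" using qdim_fin[of U W N] bnd by blast
  then have "bdd_above {card S | S. indep_mod U W S}" by (simp add: bdd_above_finite)
  then show ?thesis unfolding qdim_def by (rule cSup_upper[rotated]) (use S in blast)
qed

lemma qdim_attained:
  assumes bnd: "\<And>S. indep_mod U W S \<Longrightarrow> card S \<le> N"
  shows "\<exists>S. indep_mod U W S \<and> card S = qdim U W"
proof -
  define Q where "Q = {card S | S. indep_mod U W S}"
  have F: "finite Q" "Q \<noteq> {}" using qdim_fin[of U W N] bnd unfolding Q_def by blast+
  have "Sup Q = Max Q" using F by (simp add: cSup_eq_Max)
  moreover have "Max Q \<in> Q" using F by (rule Max_in)
  ultimately have "qdim U W \<in> Q" by (simp add: qdim_def Q_def)
  then show ?thesis unfolding Q_def by auto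
qed

lemma qdim_least:
  assumes "\<And>S. indep_mod U W S \<Longrightarrow> card S \<le> k"
  shows "qdim U W \<le> k"
  unfolding qdim_def by (rule cSup_least) (use indep_empty assms in auto)

lemma max_ext:
  assumes bnd: "\<And>S. indep_mod U W S \<Longrightarrow> card S \<le> N" and Y: "indep_mod U W Y"
  shows "\<exists>V. indep_mod U W V \<and> Y \<subseteq> V \<and> (\<forall>S'. indep_mod U W S' \<and> Y \<subseteq> S' \<longrightarrow> card S' \<le> card V)"
proof -
  have "\<exists>x. (indep_mod U W x \<and> Y \<subseteq> x) \<and> (\<forall>y. indep_mod U W y \<and> Y \<subseteq> y \<longrightarrow> card y \<le> card x)"
    by (rule Lattices_Big.ex_has_greatest_nat[where b="Suc N"]) (use Y bnd in \<open>auto simp: less_Suc_eq_le\<close>)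
  then show ?thesis by blast
qed

lemma span_max:
  assumes U: "zsub U" and W: "zsub W" and S: "indep_mod U W S" and YS: "Y \<subseteq> S"
    and mx: "\<forall>S'. indep_mod U W S' \<and> Y \<subseteq> S' \<longrightarrow> card S' \<le> card S"
    and u: "u \<in> U"
  shows "\<exists>T\<subseteq>S. sdiff u (zsum T) \<in> W"
proof (rule ccontr)
  assume na: "\<not> (\<exists>T\<subseteq>S. sdiff u (zsum T) \<in> W)"
  have fS: "finite S" "S \<subseteq> U" using S by (auto simp: indep_mod_def)
  have uS: "u \<notin> S"
  proof
    assume "u \<in> S"
    then have "sdiff u (zsum {u}) \<in> W" using W by (simp add: zsub_def)
    then show False using na \<open>u \<in> S\<close> by blast
  qed
  have "indep_mod U W (insert u S)"
    unfolding indep_mod_def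
  proof (intro conjI allI impI)
    show "finite (insert u S)" using fS by simp
    show "insert u S \<subseteq> U" using fS u by simp
    fix T assume T1: "T \<subseteq> insert u S" and T2: "T \<noteq> {}"
    note T = T1 T2
    show "zsum T \<notin> W"
    proof (cases "u \<in> T")
      case True
      have fT: "finite (T - {u})" using T fS by (meson finite_Diff finite_insert finite_subset)
      have "T = insert u (T - {u})" using True by auto
      then have "zsum T = sdiff u (zsum (T - {u}))" using fT by (metis zsum_insert Diff_iff insertI1)
      moreover have "T - {u} \<subseteq> S" using T by auto
      ultimately show ?thesis using na by auto
    next
      case False
      then have "T \<subseteq> S" using T by auto
      then show ?thesis using S T unfolding indep_mod_def by blast
    qed
  qed
  moreover have "Y \<subseteq> insert u S" using YS by auto
  ultimately have "card (insert u S) \<le> card S" using mx by blast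
  then show False using fS uS by simp
qed

lemma span_count:
  assumes U: "zsub U" and W: "zsub W" and R: "indep_mod U W R" and fS: "finite S"
    and sp: "\<forall>u\<in>U. \<exists>T\<subseteq>S. sdiff u (zsum T) \<in> W"
  shows "card R \<le> card S"
proof -
  have fR: "finite R" "R \<subseteq> U" using R by (auto simp: indep_mod_def)
  define f where "f T' = (SOME T. T \<subseteq> S \<and> sdiff (zsum T') (zsum T) \<in> W)" for T'
  have fp: "f T' \<subseteq> S \<and> sdiff (zsum T') (zsum (f T')) \<in> W" if "T' \<in> Pow R" for T'
  proof -
    have "zsum T' \<in> U" using that fR U by (intro zsum_closed) (auto intro: finite_subset)
    then have "\<exists>T. T \<subseteq> S \<and> sdiff (zsum T') (zsum T) \<in> W" using sp by blast
    then show ?thesis unfolding f_def by (rule someI_ex)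
  qed
  have inj: "inj_on f (Pow R)"
  proof
    fix T1 T2 assume T: "T1 \<in> Pow R" "T2 \<in> Pow R" "f T1 = f T2"
    have f: "finite T1" "finite T2" using T fR by (auto intro: finite_subset)
    have "sdiff (sdiff (zsum T1) (zsum (f T1))) (sdiff (zsum T2) (zsum (f T2))) \<in> W"
    proof -
      have "\<forall>a\<in>W. \<forall>b\<in>W. sdiff a b \<in> W" using W by (simp add: zsub_def)
      then show ?thesis using fp[OF T(1)] fp[OF T(2)] by blast
    qed
    then have "sdiff (zsum T1) (zsum T2) \<in> W" using T(3) by (simp only: sdiff_assoc_comm(2))
    then have "zsum (sdiff T1 T2) \<in> W" using zsum_sdiff[OF f] by simp
    moreover have "sdiff T1 T2 \<subseteq> R" using T by (auto simp: sdiff_def)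
    moreover have "\<forall>T\<subseteq>R. T \<noteq> {} \<longrightarrow> zsum T \<notin> W" using R by (simp add: indep_mod_def)
    ultimately have "sdiff T1 T2 = {}" by blast
    then show "T1 = T2" by (auto simp: sdiff_def)
  qed
  have "f ` Pow R \<subseteq> Pow S" using fp by auto
  then have "card (Pow R) \<le> card (Pow S)"
    using card_inj_on_le[OF inj] fS by auto
  then have "(2::nat) ^ card R \<le> 2 ^ card S" using fR fS by (simp add: card_Pow)
  then show ?thesis by simp
qed

lemma indep_bound2:
  assumes "indep_mod U W S" "zsub W" "\<forall>u\<in>U. u \<subseteq> A" "finite A"
  shows "card S \<le> card A"
  using indep_bound[of U W S A] assms by (simp add: zsub_def)

lemma indep_mono:
  "indep_mod U W S \<Longrightarrow> U \<subseteq> U' \<Longrightarrow> W' \<subseteq> W \<Longrightarrow> indep_mod U' W' S"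
  unfolding indep_mod_def by blast

lemma qdim_ineq:
  assumes Z1: "zsub Z1" and Z2: "zsub Z2" and Z12: "Z1 \<subseteq> Z2"
    and W1: "zsub W1" and W2: "zsub W2" and W12: "W1 \<subseteq> W2"
    and A: "finite A" "\<forall>z\<in>Z2. z \<subseteq> A"
  shows "qdim Z1 W1 + qdim Z2 W2 \<le> qdim Z2 W1 + qdim Z1 W2"
proof -
  have bnd: "card S \<le> card A" if "indep_mod U W S" "zsub W" "U \<subseteq> Z2" for U W S
    using indep_bound2[of U W S A] that A by blast
  have ZW: "zsub (Z1 \<inter> W2)" using Z1 W2 by (rule zsub_Int)
  obtain Y where Y: "indep_mod Z1 W2 Y" "card Y = qdim Z1 W2"
    using qdim_attained[of Z1 W2 "card A"] bnd[of Z1 W2] W2 Z12 by blast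
  have Ymax: "\<forall>S'. indep_mod Z1 W2 S' \<and> {} \<subseteq> S' \<longrightarrow> card S' \<le> card Y"
    using qdim_upper[of Z1 W2 "card A"] bnd[of Z1 W2] W2 Z12 Y(2) by auto
  obtain X where X: "indep_mod (Z1 \<inter> W2) W1 X"
    "\<forall>S'. indep_mod (Z1 \<inter> W2) W1 S' \<and> {} \<subseteq> S' \<longrightarrow> card S' \<le> card X"
    using max_ext[of "Z1 \<inter> W2" W1 "card A" "{}"] bnd[of "Z1 \<inter> W2" W1] W1 Z12 indep_empty by blast
  have Y2: "indep_mod Z2 W2 Y" using Y(1) Z12 by (rule indep_mono) simp
  obtain V where V: "indep_mod Z2 W2 V" "Y \<subseteq> V"
    "\<forall>S'. indep_mod Z2 W2 S' \<and> Y \<subseteq> S' \<longrightarrow> card S' \<le> card V"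
    using max_ext[of Z2 W2 "card A" Y] bnd[of Z2 W2] W2 Y2 by blast
  have fX: "finite X" "X \<subseteq> Z1 \<inter> W2" using X(1) by (auto simp: indep_mod_def)
  have fY: "finite Y" "Y \<subseteq> Z1" using Y(1) by (auto simp: indep_mod_def)
  have fV: "finite V" "V \<subseteq> Z2" using V(1) by (auto simp: indep_mod_def)
  have spY: "\<exists>T\<subseteq>Y. sdiff u (zsum T) \<in> W2" if "u \<in> Z1" for u
    using span_max[OF Z1 W2 Y(1) _ Ymax that] by blast
  have spX: "\<exists>T\<subseteq>X. sdiff u (zsum T) \<in> W1" if "u \<in> Z1 \<inter> W2" for u
    using span_max[OF ZW W1 X(1) _ X(2) that] by blast
  have spXY: "\<forall>u\<in>Z1. \<exists>T\<subseteq>X \<union> Y. sdiff u (zsum T) \<in> W1"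
  proof
    fix u assume u: "u \<in> Z1"
    obtain TY where TY: "TY \<subseteq> Y" "sdiff u (zsum TY) \<in> W2" using spY[OF u] by blast
    have "zsum TY \<in> Z1" using zsum_closed[OF Z1, of TY] TY fY by (auto intro: finite_subset)
    then have "sdiff u (zsum TY) \<in> Z1" using u Z1 by (simp add: zsub_def)
    then obtain TX where TX: "TX \<subseteq> X" "sdiff (sdiff u (zsum TY)) (zsum TX) \<in> W1"
      using spX TY by blast
    have ff: "finite TX" "finite TY" using TX TY fX fY by (auto intro: finite_subset)
    have "sdiff u (zsum (sdiff TX TY)) = sdiff (sdiff u (zsum TY)) (zsum TX)"
      using zsum_sdiff[OF ff] by (auto simp: sdiff_def)
    moreover have "sdiff TX TY \<subseteq> X \<union> Y" using TX TY by (auto simp: sdiff_def)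
    ultimately show "\<exists>T\<subseteq>X \<union> Y. sdiff u (zsum T) \<in> W1" using TX by metis
  qed
  obtain R where R: "indep_mod Z1 W1 R" "card R = qdim Z1 W1"
    using qdim_attained[of Z1 W1 "card A"] bnd[of Z1 W1] W1 Z12 by blast
  have q11: "qdim Z1 W1 \<le> card X + card Y"
    using span_count[OF Z1 W1 R(1) _ spXY] fX fY R(2) card_Un_le[of X Y] by simp
  have "\<forall>u\<in>Z2. \<exists>T\<subseteq>V. sdiff u (zsum T) \<in> W2"
    using span_max[OF Z2 W2 V(1) V(2) V(3)] by blast
  moreover obtain R2 where R2: "indep_mod Z2 W2 R2" "card R2 = qdim Z2 W2"
    using qdim_attained[of Z2 W2 "card A"] bnd[of Z2 W2] W2 by blast
  ultimately have q22: "qdim Z2 W2 \<le> card V"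
    using span_count[OF Z2 W2 R2(1) fV(1)] by simp
  have XV: "indep_mod Z2 W1 (X \<union> V)"
    unfolding indep_mod_def
  proof (intro conjI allI impI)
    show "finite (X \<union> V)" using fX fV by simp
    show "X \<union> V \<subseteq> Z2" using fX fV Z12 by auto
    fix T assume T1: "T \<subseteq> X \<union> V" and T2: "T \<noteq> {}"
    show "zsum T \<notin> W1"
    proof
      assume zT: "zsum T \<in> W1"
      define Ta where "Ta = T \<inter> X"
      define Tb where "Tb = T - X"
      have ft: "finite Ta" "finite Tb" using T1 fX fV by (auto simp: Ta_def Tb_def intro: finite_subset)
      have "T = sdiff Ta Tb" by (auto simp: Ta_def Tb_def sdiff_def)
      then have zs: "zsum T = sdiff (zsum Ta) (zsum Tb)" using zsum_sdiff[OF ft] by simp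
      have "zsum Ta \<in> W2" using zsum_closed[OF W2 ft(1)] fX by (auto simp: Ta_def)
      then have "sdiff (zsum T) (zsum Ta) \<in> W2" using zT W12 W2 by (auto simp: zsub_def)
      then have "zsum Tb \<in> W2" using zs by (simp add: sdiff_assoc_comm)
      moreover have "Tb \<subseteq> V" using T1 by (auto simp: Tb_def)
      ultimately have "Tb = {}" using V(1) unfolding indep_mod_def by blast
      then have "Ta = T" by (auto simp: Ta_def Tb_def)
      then have "zsum Ta \<in> W1" "Ta \<subseteq> X" "Ta \<noteq> {}" using zT T2 by (auto simp: Ta_def)
      then show False using X(1) unfolding indep_mod_def by blast
    qed
  qed
  have disj: "X \<inter> V = {}"
  proof (rule ccontr)
    assume "X \<inter> V \<noteq> {}"
    then obtain v where "v \<in> X" "v \<in> V" by blast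
    then have "zsum {v} \<in> W2" using fX by auto
    then show False using V(1) \<open>v \<in> V\<close> unfolding indep_mod_def by blast
  qed
  have q21: "card X + card V \<le> qdim Z2 W1"
    using qdim_upper[of Z2 W1 "card A", OF _ XV] bnd[of Z2 W1] W1 card_Un_disjoint[OF fX(1) fV(1) disj]
    by auto
  show ?thesis using q11 q22 q21 Y(2) by linarith
qed

definition stg :: "('g, 'p, 'z) fcc_scheme \<Rightarrow> 'p list \<Rightarrow> nat \<Rightarrow> 'g set" where
  "stg D ps i = {g\<in>gens D. grd D g \<in> set (take i ps)}"

lemma fmap_stage:
  assumes "fmap le k D E \<phi>" "\<forall>h\<in>gens E. grd E h \<in> P" "compatible_order P le fP ps"
    "g \<in> stg D ps i"
  shows "\<phi> g \<subseteq> stg E ps i"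
proof
  fix h assume h: "h \<in> \<phi> g"
  have g: "g \<in> gens D" "grd D g \<in> set (take i ps)" using assms(4) by (auto simp: stg_def)
  have hE: "h \<in> gens E" "le (grd E h) (grd D g)" using assms(1) g h by (auto simp: fmap_def)
  have co: "distinct ps" "set ps = P" "\<forall>i<length ps. \<forall>j<length ps. le (ps ! i) (ps ! j) \<longrightarrow> i \<le> j"
    using assms(3) by (auto simp: compatible_order_def)
  obtain l where l: "l < length ps" "l < i" "ps ! l = grd D g"
    using g(2) by (auto simp: in_set_conv_nth)
  obtain k where k: "k < length ps" "ps ! k = grd E h"
    using hE assms(2) co(2) by (metis in_set_conv_nth)
  have "k \<le> l" using co(3) k l hE(2) by metis
  then have "grd E h \<in> set (take i ps)" using k l
    by (metis in_set_conv_nth length_take min_less_iff_conj nth_take order.strict_trans1)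
  then show "h \<in> stg E ps i" using hE by (simp add: stg_def)
qed

lemma cycles_zsub: "zsub (cycles D A n)"
  unfolding zsub_def cycles_def chains_def
  by (auto simp: lin_sdiff finite_sdiff) (auto simp: sdiff_def)

lemma boundaries_zsub:
  assumes "\<forall>g\<in>B. finite (bdry D g)"
  shows "zsub (boundaries D B n)"
  unfolding zsub_def
proof (intro conjI ballI)
  have "{} \<in> chains D B (n + 1)" by (simp add: chains_def)
  then show "{} \<in> boundaries D B n" unfolding boundaries_def by (metis image_eqI lin_empty)
next
  fix a b assume "a \<in> boundaries D B n" "b \<in> boundaries D B n"
  then obtain c1 c2 where c: "c1 \<in> chains D B (n + 1)" "c2 \<in> chains D B (n + 1)"
    "a = lin (bdry D) c1" "b = lin (bdry D) c2" by (auto simp: boundaries_def)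
  then have "sdiff a b = lin (bdry D) (sdiff c1 c2)" by (simp add: lin_sdiff chains_def)
  moreover have "sdiff c1 c2 \<in> chains D B (n + 1)" using c by (auto simp: chains_def sdiff_def)
  ultimately show "sdiff a b \<in> boundaries D B n" by (simp add: boundaries_def)
next
  fix a assume "a \<in> boundaries D B n"
  then obtain c where "c \<in> chains D B (n + 1)" "a = lin (bdry D) c" by (auto simp: boundaries_def)
  then show "finite a" using assms by (auto simp: chains_def intro!: lin_finite)
qed

lemma indep_transfer:
  assumes U: "zsub U" and W': "{} \<in> W'" and L0: "L {} = {}"
    and add: "\<And>a b. finite a \<Longrightarrow> finite b \<Longrightarrow> L (sdiff a b) = sdiff (L a) (L b)"
    and LU: "\<forall>u\<in>U. L u \<in> U'" and LW: "\<forall>u\<in>U. L u \<in> W' \<longrightarrow> u \<in> W"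
    and S: "indep_mod U W S"
  shows "indep_mod U' W' (L ` S) \<and> card (L ` S) = card S"
proof -
  have fS: "finite S" "S \<subseteq> U" using S by (auto simp: indep_mod_def)
  have finU: "\<forall>u\<in>U. finite u" using U by (simp add: zsub_def)
  have inj: "inj_on L S"
  proof
    fix s1 s2 assume s: "s1 \<in> S" "s2 \<in> S" "L s1 = L s2"
    show "s1 = s2"
    proof (rule ccontr)
      assume ne: "s1 \<noteq> s2"
      have "s1 \<in> U" "s2 \<in> U" using s fS by auto
      then have sU: "sdiff s1 s2 \<in> U" using U by (simp add: zsub_def)
      have "L (sdiff s1 s2) = sdiff (L s1) (L s2)" using add finU \<open>s1 \<in> U\<close> \<open>s2 \<in> U\<close> by auto
      then have "L (sdiff s1 s2) = {}" using s(3) by simp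
      then have "sdiff s1 s2 \<in> W" using LW W' sU by metis
      moreover have "zsum {s1, s2} = sdiff s1 s2" using ne by (simp add: zsum_insert)
      moreover have "{s1, s2} \<subseteq> S" using s by auto
      ultimately show False using S unfolding indep_mod_def by (metis insert_not_empty)
    qed
  qed
  have "indep_mod U' W' (L ` S)"
    unfolding indep_mod_def
  proof (intro conjI allI impI)
    show "finite (L ` S)" using fS by simp
    show "L ` S \<subseteq> U'" using LU fS by auto
    fix T' assume T1: "T' \<subseteq> L ` S" and T2: "T' \<noteq> {}"
    obtain T where T: "T \<subseteq> S" "T' = L ` T" using T1 by (auto simp: subset_image_iff)
    have fT: "finite T" using T fS by (auto intro: finite_subset)
    have zT: "zsum T' = L (zsum T)"
      using zsum_map[OF fT _ add L0] T inj fS finU by (auto intro: inj_on_subset)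
    have "zsum T \<in> U" using zsum_closed[OF U fT] T fS by auto
    moreover have "zsum T \<notin> W" using S T T2 unfolding indep_mod_def by auto
    ultimately show "zsum T' \<notin> W'" using LW zT by auto
  qed
  then show ?thesis using inj by (simp add: card_image)
qed

lemma transfer_dir:
  assumes okD: "\<forall>g\<in>gens D. grd D g \<in> P \<and> finite (bdry D g)"
    and okE: "\<forall>h\<in>gens E. grd E h \<in> P \<and> finite (bdry E h)"
    and co: "compatible_order P le fP ps"
    and \<phi>: "fchain_map le D E \<phi>" and \<psi>: "fchain_map le E D \<psi>"
    and H: "fhomotopic le D D (\<lambda>g. lin \<psi> (\<phi> g)) (\<lambda>g. {g})"
    and ij: "i \<le> j"
    and S: "indep_mod (cycles D (stg D ps i) n) (boundaries D (stg D ps j) n) S"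
  shows "indep_mod (cycles E (stg E ps i) n) (boundaries E (stg E ps j) n) (lin \<phi> ` S)
         \<and> card (lin \<phi> ` S) = card S"
proof (rule indep_transfer[OF cycles_zsub _ lin_empty lin_sdiff _ _ S])
  have fm: "fmap le 0 D E \<phi>" and cm: "\<forall>g\<in>gens D. lin (bdry E) (\<phi> g) = lin \<phi> (bdry D g)"
    using \<phi> by (auto simp: fchain_map_def)
  have fm': "fmap le 0 E D \<psi>" and cm': "\<forall>h\<in>gens E. lin (bdry D) (\<psi> h) = lin \<psi> (bdry E h)"
    using \<psi> by (auto simp: fchain_map_def)
  have gE: "\<forall>h\<in>gens E. grd E h \<in> P" and gD: "\<forall>g\<in>gens D. grd D g \<in> P" using okE okD by auto
  have stgD: "stg D ps i \<subseteq> gens D" "stg D ps j \<subseteq> gens D" by (auto simp: stg_def)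
  have stgE: "stg E ps j \<subseteq> gens E" by (auto simp: stg_def)
  have stij: "stg D ps i \<subseteq> stg D ps j" using ij
    by (auto simp: stg_def) (meson set_take_subset_set_take subsetD)
  show "{} \<in> boundaries E (stg E ps j) n"
    using boundaries_zsub[of "stg E ps j" E n] okE stgE by (auto simp: zsub_def)
  have Lcyc: "lin \<phi> u \<in> cycles E (stg E ps i) n \<and> lin (bdry E) (lin \<phi> u) = {}"
    if u: "u \<in> cycles D (stg D ps i) n" for u
  proof -
    have u1: "finite u" "u \<subseteq> stg D ps i" "\<forall>g\<in>u. deg D g = n" "lin (bdry D) u = {}"
      using u by (auto simp: cycles_def chains_def)
    have ug: "u \<subseteq> gens D" using u1 stgD by auto
    have fin\<phi>: "\<forall>g\<in>u. finite (\<phi> g)" using fm ug by (auto simp: fmap_def)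
    have "lin (bdry E) (lin \<phi> u) = lin (\<lambda>g. lin (bdry E) (\<phi> g)) u"
      using lin_comp[OF u1(1) fin\<phi>, of "bdry E"] .
    also have "\<dots> = lin (\<lambda>g. lin \<phi> (bdry D g)) u"
      using cm ug by (intro lin_cong) auto
    also have "\<dots> = lin \<phi> (lin (bdry D) u)"
      using lin_comp[OF u1(1), of "bdry D" \<phi>] okD ug by auto
    finally have cyc: "lin (bdry E) (lin \<phi> u) = {}" using u1 by simp
    have "lin \<phi> u \<subseteq> stg E ps i"
      using lin_subset[of \<phi> u] fmap_stage[OF fm gE co] u1 by blast
    moreover have "finite (lin \<phi> u)" using lin_finite[OF u1(1) fin\<phi>] .
    moreover have "\<forall>h\<in>lin \<phi> u. deg E h = n"
      using lin_subset[of \<phi> u] fm ug u1(3) by (fastforce simp: fmap_def)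
    ultimately show ?thesis using cyc by (auto simp: cycles_def chains_def)
  qed
  show "\<forall>u\<in>cycles D (stg D ps i) n. lin \<phi> u \<in> cycles E (stg E ps i) n" using Lcyc by blast
  show "\<forall>u\<in>cycles D (stg D ps i) n. lin \<phi> u \<in> boundaries E (stg E ps j) n \<longrightarrow> u \<in> boundaries D (stg D ps j) n"
  proof (intro ballI impI)
    fix u assume u: "u \<in> cycles D (stg D ps i) n" and b: "lin \<phi> u \<in> boundaries E (stg E ps j) n"
    have u1: "finite u" "u \<subseteq> stg D ps i" "\<forall>g\<in>u. deg D g = n" "lin (bdry D) u = {}"
      using u by (auto simp: cycles_def chains_def)
    have ug: "u \<subseteq> gens D" using u1 stgD by auto
    have fin\<phi>: "\<forall>g\<in>u. finite (\<phi> g)" using fm ug by (auto simp: fmap_def)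
    obtain c where c: "c \<in> chains E (stg E ps j) (n + 1)" "lin \<phi> u = lin (bdry E) c"
      using b by (auto simp: boundaries_def)
    have c1: "finite c" "c \<subseteq> gens E" "\<forall>h\<in>c. deg E h = n + 1"
      using c stgE by (auto simp: chains_def)
    obtain Sh where Sh: "fmap le 1 D D Sh"
      "\<forall>g\<in>gens D. sdiff {g} (lin \<psi> (\<phi> g)) = sdiff (lin (bdry D) (Sh g)) (lin Sh (bdry D g))"
      using H by (auto simp: fhomotopic_def)
    have finSh: "\<forall>g\<in>u. finite (Sh g)" using Sh(1) ug by (auto simp: fmap_def)
    have fin\<psi>: "\<forall>h\<in>c. finite (\<psi> h)" using fm' c1 by (auto simp: fmap_def)
    have "sdiff u (lin \<psi> (lin \<phi> u)) = sdiff (lin (\<lambda>g. {g}) u) (lin (\<lambda>g. lin \<psi> (\<phi> g)) u)"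
      using lin_comp[OF u1(1) fin\<phi>, of \<psi>] by (simp add: lin_single)
    also have "\<dots> = lin (\<lambda>g. sdiff {g} (lin \<psi> (\<phi> g))) u"
      by (rule lin_fun_sdiff[OF u1(1), symmetric])
    also have "\<dots> = lin (\<lambda>g. sdiff (lin (bdry D) (Sh g)) (lin Sh (bdry D g))) u"
      using Sh(2) ug by (intro lin_cong) auto
    also have "\<dots> = sdiff (lin (\<lambda>g. lin (bdry D) (Sh g)) u) (lin (\<lambda>g. lin Sh (bdry D g)) u)"
      by (rule lin_fun_sdiff[OF u1(1)])
    also have "\<dots> = sdiff (lin (bdry D) (lin Sh u)) (lin Sh (lin (bdry D) u))"
    proof -
      have fbu: "\<forall>x\<in>u. finite (bdry D x)" using okD ug by auto
      show ?thesis using lin_comp[OF u1(1) finSh, of "bdry D"] lin_comp[OF u1(1) fbu, of Sh] by simp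
    qed
    finally have e1: "sdiff u (lin \<psi> (lin \<phi> u)) = lin (bdry D) (lin Sh u)" using u1 by simp
    have "lin \<psi> (lin \<phi> u) = lin \<psi> (lin (bdry E) c)" using c by simp
    also have "\<dots> = lin (\<lambda>h. lin \<psi> (bdry E h)) c"
      using lin_comp[OF c1(1), of "bdry E" \<psi>] okE c1 by auto
    also have "\<dots> = lin (\<lambda>h. lin (bdry D) (\<psi> h)) c"
      using cm' c1 by (intro lin_cong) auto
    also have "\<dots> = lin (bdry D) (lin \<psi> c)"
      using lin_comp[OF c1(1) fin\<psi>, of "bdry D"] by simp
    finally have e2: "lin \<psi> (lin \<phi> u) = lin (bdry D) (lin \<psi> c)" .
    have f1: "finite (lin \<psi> c)" using lin_finite[OF c1(1) fin\<psi>] .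
    have f2: "finite (lin Sh u)" using lin_finite[OF u1(1) finSh] .
    have "u = sdiff (sdiff u (lin \<psi> (lin \<phi> u))) (lin \<psi> (lin \<phi> u))"
      by (simp only: sdiff_assoc_comm(4))
    also have "\<dots> = sdiff (lin (bdry D) (lin Sh u)) (lin (bdry D) (lin \<psi> c))"
      using e1 e2 by simp
    also have "\<dots> = sdiff (lin (bdry D) (lin \<psi> c)) (lin (bdry D) (lin Sh u))"
      by (rule sdiff_assoc_comm(3))
    finally have "u = sdiff (lin (bdry D) (lin \<psi> c)) (lin (bdry D) (lin Sh u))" .
    also have "\<dots> = lin (bdry D) (sdiff (lin \<psi> c) (lin Sh u))"
      using lin_sdiff[OF f1 f2, of "bdry D"] by simp
    finally have ue: "u = lin (bdry D) (sdiff (lin \<psi> c) (lin Sh u))" .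
    have s1: "lin \<psi> c \<subseteq> stg D ps j"
      using lin_subset[of \<psi> c] fmap_stage[OF fm' gD co] c(1) by (fastforce simp: chains_def)
    have s2: "lin Sh u \<subseteq> stg D ps j"
      using lin_subset[of Sh u] fmap_stage[OF Sh(1) gD co] u1 stij by fastforce
    have d1: "\<forall>g\<in>lin \<psi> c. deg D g = n + 1"
      using lin_subset[of \<psi> c] fm' c1 by (fastforce simp: fmap_def)
    have d2: "\<forall>g\<in>lin Sh u. deg D g = n + 1"
      using lin_subset[of Sh u] Sh(1) ug u1(3) by (fastforce simp: fmap_def)
    have "sdiff (lin \<psi> c) (lin Sh u) \<in> chains D (stg D ps j) (n + 1)"
      using f1 f2 s1 s2 d1 d2 by (auto simp: chains_def sdiff_def)
    then show "u \<in> boundaries D (stg D ps j) n" using ue by (auto simp: boundaries_def)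
  qed
qed

lemma conley_prank:
  assumes okD: "\<forall>g\<in>gens D. grd D g \<in> P \<and> finite (bdry D g)"
    and okE: "\<forall>h\<in>gens E. grd E h \<in> P \<and> finite (bdry E h)"
    and finE: "finite (gens E)"
    and co: "compatible_order P le fP ps"
    and eq: "fhtpy_equivalent le D E"
    and ij: "i \<le> j"
  shows "prank D (stg D ps i) (stg D ps j) n = prank E (stg E ps i) (stg E ps j) n"
proof -
  obtain \<phi> \<psi> where \<phi>: "fchain_map le D E \<phi>" and \<psi>: "fchain_map le E D \<psi>"
    and H1: "fhomotopic le D D (\<lambda>g. lin \<psi> (\<phi> g)) (\<lambda>g. {g})"
    and H2: "fhomotopic le E E (\<lambda>h. lin \<phi> (\<psi> h)) (\<lambda>h. {h})"
    using eq by (auto simp: fhtpy_equivalent_def)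
  let ?UD = "cycles D (stg D ps i) n" and ?WD = "boundaries D (stg D ps j) n"
  let ?UE = "cycles E (stg E ps i) n" and ?WE = "boundaries E (stg E ps j) n"
  have tD: "indep_mod ?UE ?WE (lin \<phi> ` S) \<and> card (lin \<phi> ` S) = card S" if "indep_mod ?UD ?WD S" for S
    using transfer_dir[OF okD okE co \<phi> \<psi> H1 ij that] .
  have tE: "indep_mod ?UD ?WD (lin \<psi> ` S) \<and> card (lin \<psi> ` S) = card S" if "indep_mod ?UE ?WE S" for S
    using transfer_dir[OF okE okD co \<psi> \<phi> H2 ij that] .
  have stgE: "stg E ps j \<subseteq> gens E" by (auto simp: stg_def)
  have zW: "zsub ?WE" using boundaries_zsub[of "stg E ps j" E n] okE stgE by auto
  have bE: "card S \<le> card (gens E)" if "indep_mod ?UE ?WE S" for S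
    using indep_bound2[OF that zW _ finE] by (auto simp: cycles_def chains_def stg_def)
  have bD: "card S \<le> card (gens E)" if "indep_mod ?UD ?WD S" for S
  proof -
    have "card S = card (lin \<phi> ` S)" using tD[OF that] by simp
    also have "\<dots> \<le> card (gens E)" using bE tD[OF that] by blast
    finally show ?thesis .
  qed
  have "qdim ?UD ?WD \<le> qdim ?UE ?WE"
  proof (rule qdim_least)
    fix S assume S: "indep_mod ?UD ?WD S"
    have "card S = card (lin \<phi> ` S)" using tD[OF S] by simp
    also have "\<dots> \<le> qdim ?UE ?WE" using qdim_upper[of ?UE ?WE "card (gens E)", OF bE] tD[OF S] by blast
    finally show "card S \<le> qdim ?UE ?WE" .
  qed
  moreover have "qdim ?UE ?WE \<le> qdim ?UD ?WD"
  proof (rule qdim_least)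
    fix S assume S: "indep_mod ?UE ?WE S"
    have "card S = card (lin \<psi> ` S)" using tE[OF S] by simp
    also have "\<dots> \<le> qdim ?UD ?WD" using qdim_upper[of ?UD ?WD "card (gens E)", OF bD] tE[OF S] by blast
    finally show "card S \<le> qdim ?UD ?WD" .
  qed
  ultimately show ?thesis by (simp add: prank_def)
qed

definition muR :: "(nat \<Rightarrow> nat \<Rightarrow> int) \<Rightarrow> nat \<Rightarrow> nat \<Rightarrow> int" where
  "muR R a b = R a b - R (a - 1) b - R a (b + 1) + R (a - 1) (b + 1)"

definition PMR :: "(nat \<Rightarrow> nat \<Rightarrow> int) \<Rightarrow> nat \<Rightarrow> (nat \<Rightarrow> ereal) \<Rightarrow> (ereal \<times> ereal) multiset" where
  "PMR R m val = (\<Sum>(a, b)\<in>{(a, b). 1 \<le> a \<and> a \<le> b \<and> b \<le> m}.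
           if val a = val (b + 1) then {#} else replicate_mset (nat (muR R a b)) (val a, val (b + 1)))"

definition RR :: "('g, 'p, 'z) fcc_scheme \<Rightarrow> (nat \<Rightarrow> 'g set) \<Rightarrow> nat \<Rightarrow> int \<Rightarrow> nat \<Rightarrow> nat \<Rightarrow> int" where
  "RR D filt m n i j = (if i = 0 \<or> m < j then 0 else int (prank D (filt i) (filt j) n))"

lemma pm_PMR: "pers_module D filt m val n = PMR (RR D filt m n) m val"
  unfolding pers_module_def PMR_def muR_def RR_def Let_def by simp

lemma PMR_cong:
  assumes "\<And>i j. i \<le> j \<Longrightarrow> R i j = R' i j"
  shows "PMR R m val = PMR R' m val"
  unfolding PMR_def muR_def
  by (rule sum.cong) (auto simp: assms)

lemma dc_max:
  fixes N :: nat
  assumes dc: "\<And>a b. 1 \<le> b \<Longrightarrow> b \<le> a \<Longrightarrow> a \<le> N \<Longrightarrow> Q a \<Longrightarrow> Q b"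
  shows "Max (insert 0 {a\<in>{1..N}. Q a}) \<le> N \<and>
         (\<forall>a. 1 \<le> a \<longrightarrow> a \<le> N \<longrightarrow> (Q a \<longleftrightarrow> a \<le> Max (insert 0 {a\<in>{1..N}. Q a})))"
proof -
  let ?k = "Max (insert 0 {a\<in>{1..N}. Q a})"
  have fin: "finite (insert 0 {a\<in>{1..N}. Q a})" by simp
  have kin: "?k \<in> insert 0 {a\<in>{1..N}. Q a}" using fin by (intro Max_in) auto
  have "?k \<le> N" using kin by auto
  moreover have "Q a \<longleftrightarrow> a \<le> ?k" if "1 \<le> a" "a \<le> N" for a
  proof
    assume "Q a" then show "a \<le> ?k" using that fin by (intro Max_ge) auto
  next
    assume ak: "a \<le> ?k"
    then have "?k \<noteq> 0" using that by auto
    then have "?k \<in> {a\<in>{1..N}. Q a}" using kin by auto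
    then show "Q a" using dc[of a ?k] ak that by auto
  qed
  ultimately show ?thesis by blast
qed

lemma telesc:
  fixes F :: "nat \<Rightarrow> int"
  assumes "l \<le> h"
  shows "(\<Sum>a\<in>{Suc l..h}. F a - F (a - 1)) = F h - F l"
  using assms
proof (induction h)
  case 0 then show ?case by simp
next
  case (Suc h)
  show ?case
  proof (cases "l = Suc h")
    case True then show ?thesis by simp
  next
    case False
    then have "l \<le> h" using Suc by simp
    moreover have "{Suc l..Suc h} = insert (Suc h) {Suc l..h}" using \<open>l \<le> h\<close> by auto
    ultimately show ?thesis using Suc by simp
  qed
qed

lemma telesc2:
  fixes g :: "nat \<Rightarrow> int"
  assumes "l \<le> h"
  shows "(\<Sum>b\<in>{l..<h}. g b - g (Suc b)) = g l - g h"
proof -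
  have "(\<Sum>b\<in>{l..<h}. g b - g (Suc b)) = - (\<Sum>b\<in>{l..<h}. g (Suc b) - g b)"
    by (simp add: sum_negf[symmetric])
  also have "\<dots> = g l - g h" using sum_Suc_diff'[OF assms, of g] by simp
  finally show ?thesis .
qed

lemma block_PMR:
  fixes R R' :: "nat \<Rightarrow> nat \<Rightarrow> int" and val :: "nat \<Rightarrow> ereal"
  assumes mono: "\<And>i j. 1 \<le> i \<Longrightarrow> i \<le> j \<Longrightarrow> j \<le> m + 1 \<Longrightarrow> val i \<le> val j"
    and inf: "val (m + 1) = \<infinity>"
    and nn: "\<And>a b. 1 \<le> a \<Longrightarrow> a \<le> b \<Longrightarrow> b \<le> m \<Longrightarrow> 0 \<le> muR R a b"
    and nn': "\<And>a b. 1 \<le> a \<Longrightarrow> a \<le> b \<Longrightarrow> b \<le> m \<Longrightarrow> 0 \<le> muR R' a b"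
    and eqR: "\<And>i j. i = 0 \<or> (1 \<le> i \<and> i \<le> m \<and> val i < val (Suc i)) \<Longrightarrow>
                j = 0 \<or> m < j \<or> (1 \<le> j \<and> j \<le> m \<and> val j < val (Suc j)) \<Longrightarrow> R i j = R' i j"
  shows "PMR R m val = PMR R' m val"
proof -
  define I where "I = {(a, b). 1 \<le> a \<and> a \<le> b \<and> b \<le> (m::nat)}"
  have finI: "finite I"
  proof -
    have "I \<subseteq> {..m} \<times> {..m}" by (auto simp: I_def)
    then show ?thesis by (rule finite_subset) simp
  qed
  define lo where "lo t = Max (insert 0 {a\<in>{1..m+1}. val a < t})" for t
  define hi where "hi t = Max (insert 0 {a\<in>{1..m+1}. val a \<le> t})" for t
  have lo: "lo t \<le> m + 1 \<and> (\<forall>a. 1 \<le> a \<longrightarrow> a \<le> m + 1 \<longrightarrow> (val a < t \<longleftrightarrow> a \<le> lo t))" for t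
    unfolding lo_def
    by (rule dc_max) (meson mono order.strict_trans1)
  have hi: "hi t \<le> m + 1 \<and> (\<forall>a. 1 \<le> a \<longrightarrow> a \<le> m + 1 \<longrightarrow> (val a \<le> t \<longleftrightarrow> a \<le> hi t))" for t
    unfolding hi_def
    by (rule dc_max) (meson mono order.trans)
  have lohi: "lo t \<le> hi t" for t
  proof (cases "lo t = 0")
    case False
    then have "val (lo t) < t" using lo[of t] by auto
    then have "val (lo t) \<le> t" by simp
    then show ?thesis using hi[of t] lo[of t] False by auto
  qed simp
  have glo: "lo t = 0 \<or> lo t = m + 1 \<or> (1 \<le> lo t \<and> lo t \<le> m \<and> val (lo t) < val (Suc (lo t)))" for t
  proof (cases "lo t = 0 \<or> lo t = m + 1")
    case False
    then have r: "1 \<le> lo t" "lo t \<le> m" using lo[of t] by auto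
    then have "val (lo t) < t" using lo[of t] by auto
    moreover have "\<not> val (Suc (lo t)) < t" using lo[of t] r by auto
    ultimately show ?thesis using r by auto
  qed auto
  have ghi: "hi t = 0 \<or> hi t = m + 1 \<or> (1 \<le> hi t \<and> hi t \<le> m \<and> val (hi t) < val (Suc (hi t)))" for t
  proof (cases "hi t = 0 \<or> hi t = m + 1")
    case False
    then have r: "1 \<le> hi t" "hi t \<le> m" using hi[of t] by auto
    then have "val (hi t) \<le> t" using hi[of t] by auto
    moreover have "\<not> val (Suc (hi t)) \<le> t" using hi[of t] r by auto
    ultimately show ?thesis using r by auto
  qed auto
  define Cnt where "Cnt R x y = (\<Sum>(a, b)\<in>I. if val a = x \<and> val (b + 1) = y \<and> x \<noteq> y then nat (muR R a b) else 0)"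
    for R :: "nat \<Rightarrow> nat \<Rightarrow> int" and x y
  have cnt: "count (PMR R m val) (x, y) = Cnt R x y" for R x y
    unfolding PMR_def Cnt_def I_def count_sum
    by (rule sum.cong) auto
  have main: "Cnt R x y = Cnt R' x y" for x y
  proof (cases "x < y")
    case False
    have z: "Cnt Q x y = 0" for Q
      unfolding Cnt_def
    proof (rule sum.neutral, clarify)
      fix a b assume ab: "(a, b) \<in> I"
      have "val a \<le> val (b + 1)" using ab mono[of a "b + 1"] by (auto simp: I_def)
      then show "(if val a = x \<and> val (b + 1) = y \<and> x \<noteq> y then nat (muR Q a b) else 0) = 0"
        using False by auto
    qed
    show ?thesis using z[of R] z[of R'] by simp
  next
    case True
    then have xinf: "x \<noteq> \<infinity>" by auto
    have hix: "hi x \<le> m"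
    proof (rule ccontr)
      assume "\<not> hi x \<le> m"
      then have "hi x = m + 1" using hi[of x] by auto
      then have "val (m + 1) \<le> x" using hi[of x] by auto
      then show False using inf xinf by simp
    qed
    have lox: "lo x \<le> m" using lohi[of x] hix by simp
    define A where "A = {Suc (lo x)..hi x}"
    define B where "B = {lo y..<hi y}"
    have mem: "((a, b) \<in> I \<and> val a = x \<and> val (b + 1) = y) \<longleftrightarrow> (a, b) \<in> A \<times> B" for a b
    proof
      assume h: "(a, b) \<in> I \<and> val a = x \<and> val (b + 1) = y"
      then have r: "1 \<le> a" "a \<le> b" "b \<le> m" by (auto simp: I_def)
      have "a \<le> hi x" "\<not> a \<le> lo x" using h r hi[of x] lo[of x] by auto
      moreover have "Suc b \<le> hi y" "\<not> Suc b \<le> lo y" using h r hi[of y] lo[of y] by auto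
      ultimately show "(a, b) \<in> A \<times> B" by (auto simp: A_def B_def)
    next
      assume h: "(a, b) \<in> A \<times> B"
      then have r: "Suc (lo x) \<le> a" "a \<le> hi x" "lo y \<le> b" "b < hi y" by (auto simp: A_def B_def)
      have hy: "hi y \<le> m + 1" using hi by blast
      have a1: "1 \<le> a" "a \<le> m + 1" using r hix by auto
      have "val a \<le> x" using hi[of x] a1 r(2) by blast
      moreover have "\<not> val a < x" using lo[of x] a1 r(1) by auto
      ultimately have va: "val a = x" by (simp add: not_less)
      have b1: "1 \<le> b + 1" "b + 1 \<le> m + 1" using r hy by auto
      have "val (b + 1) \<le> y" using hi[of y] b1 r(4) by auto
      moreover have "\<not> val (b + 1) < y" using lo[of y] b1 r(3) by auto
      ultimately have vb: "val (b + 1) = y" by (simp add: not_less)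
      have "a \<le> b"
      proof (rule ccontr)
        assume "\<not> a \<le> b"
        then have "val (b + 1) \<le> val a" using mono[of "b + 1" a] r hix by auto
        then show False using va vb True by simp
      qed
      then show "(a, b) \<in> I \<and> val a = x \<and> val (b + 1) = y"
        using r va vb hy by (auto simp: I_def)
    qed
    have ABI: "A \<times> B \<subseteq> I" using mem by blast
    have closed: "int (Cnt Q x y) = (Q (hi x) (lo y) - Q (hi x) (hi y)) - (Q (lo x) (lo y) - Q (lo x) (hi y))"
      if nnQ: "\<And>a b. 1 \<le> a \<Longrightarrow> a \<le> b \<Longrightarrow> b \<le> m \<Longrightarrow> 0 \<le> muR Q a b" for Q
    proof -
      have "int (Cnt Q x y) = (\<Sum>(a, b)\<in>I. if val a = x \<and> val (b + 1) = y then muR Q a b else 0)"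
        unfolding Cnt_def of_nat_sum
        by (rule sum.cong) (use True nnQ in \<open>auto simp: I_def\<close>)
      also have "\<dots> = (\<Sum>(a, b)\<in>A \<times> B. muR Q a b)"
      proof (rule sum.mono_neutral_cong_right[OF finI ABI])
        have m1: "\<And>a b. (a, b) \<in> I \<Longrightarrow> (a, b) \<notin> A \<times> B \<Longrightarrow> \<not> (val a = x \<and> val (Suc b) = y)"
          using mem by auto
        have m2: "\<And>a b. (a, b) \<in> A \<times> B \<Longrightarrow> val a = x \<and> val (Suc b) = y"
          using mem by auto
        show "\<forall>i\<in>I - A \<times> B. (case i of (a, b) \<Rightarrow> if val a = x \<and> val (b + 1) = y then muR Q a b else 0) = 0"
        proof
          fix p assume p: "p \<in> I - A \<times> B"
          obtain a b where ab: "p = (a, b)" by fastforce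
          have "\<not> (val a = x \<and> val (Suc b) = y)" using m1 p ab by blast
          then show "(case p of (a, b) \<Rightarrow> if val a = x \<and> val (b + 1) = y then muR Q a b else 0) = 0"
            using ab by auto
        qed
        show "(case p of (a, b) \<Rightarrow> if val a = x \<and> val (b + 1) = y then muR Q a b else 0) = (case p of (a, b) \<Rightarrow> muR Q a b)"
          if "p \<in> A \<times> B" for p
          using m2 that by auto
      qed
      also have "\<dots> = (\<Sum>a\<in>A. \<Sum>b\<in>B. muR Q a b)"
        by (rule sum.cartesian_product[symmetric])
      also have "\<dots> = (\<Sum>a\<in>A. (Q a (lo y) - Q (a - 1) (lo y)) - (Q a (hi y) - Q (a - 1) (hi y)))"
      proof (rule sum.cong[OF refl])
        fix a
        have "(\<Sum>b\<in>B. muR Q a b) = (\<Sum>b\<in>{lo y..<hi y}. (\<lambda>b. Q a b - Q (a - 1) b) b - (\<lambda>b. Q a b - Q (a - 1) b) (Suc b))"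
          unfolding B_def muR_def by (rule sum.cong) auto
        also have "\<dots> = (Q a (lo y) - Q (a - 1) (lo y)) - (Q a (hi y) - Q (a - 1) (hi y))"
          by (rule telesc2[OF lohi])
        finally show "(\<Sum>b\<in>B. muR Q a b) = (Q a (lo y) - Q (a - 1) (lo y)) - (Q a (hi y) - Q (a - 1) (hi y))" .
      qed
      also have "\<dots> = (\<Sum>a\<in>{Suc (lo x)..hi x}. (\<lambda>a. Q a (lo y) - Q a (hi y)) a - (\<lambda>a. Q a (lo y) - Q a (hi y)) (a - 1))"
        unfolding A_def by (rule sum.cong) auto
      also have "\<dots> = (Q (hi x) (lo y) - Q (hi x) (hi y)) - (Q (lo x) (lo y) - Q (lo x) (hi y))"
        by (rule telesc[OF lohi])
      finally show ?thesis .
    qed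
    have gi: "i = 0 \<or> (1 \<le> i \<and> i \<le> m \<and> val i < val (Suc i))" if "i \<in> {lo x, hi x}" for i
      using that glo[of x] ghi[of x] lox hix by auto
    have gj: "j = 0 \<or> m < j \<or> (1 \<le> j \<and> j \<le> m \<and> val j < val (Suc j))" if "j \<in> {lo y, hi y}" for j
      using that glo[of y] ghi[of y] by auto
    have e: "R i j = R' i j" if "i \<in> {lo x, hi x}" "j \<in> {lo y, hi y}" for i j
      using eqR[OF gi[OF that(1)] gj[OF that(2)]] .
    have c1: "int (Cnt R x y) = (R (hi x) (lo y) - R (hi x) (hi y)) - (R (lo x) (lo y) - R (lo x) (hi y))"
      by (rule closed) (rule nn)
    have c2: "int (Cnt R' x y) = (R' (hi x) (lo y) - R' (hi x) (hi y)) - (R' (lo x) (lo y) - R' (lo x) (hi y))"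
      by (rule closed) (rule nn')
    have "int (Cnt R x y) = int (Cnt R' x y)"
      unfolding c1 c2 using e by simp
    then show ?thesis by simp
  qed
  show ?thesis
    unfolding multiset_eq_iff
  proof
    fix p :: "ereal \<times> ereal"
    obtain x y where "p = (x, y)" by fastforce
    then show "count (PMR R m val) p = count (PMR R' m val) p" using cnt main by simp
  qed
qed

lemma md_facts:
  assumes "morse_decomposition K \<V> P le M"
  shows "finite P" "\<And>p. p \<in> P \<Longrightarrow> M p \<subseteq> K"
    "\<And>p q \<sigma>. p \<in> P \<Longrightarrow> q \<in> P \<Longrightarrow> \<sigma> \<in> M p \<Longrightarrow> \<sigma> \<in> M q \<Longrightarrow> p = q"
    "\<And>\<sigma>. \<sigma> \<in> K \<Longrightarrow> \<exists>p\<in>P. \<sigma> \<in> M p"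
  using assms unfolding morse_decomposition_def by blast+

lemma grd_C_eq:
  assumes "morse_decomposition K \<V> P le M" "p \<in> P" "\<sigma> \<in> M p"
  shows "grd (morse_cc K P M) \<sigma> = p"
proof -
  have "(THE p. p \<in> P \<and> \<sigma> \<in> M p) = p"
    by (rule the_equality) (use assms md_facts(3)[OF assms(1)] in auto)
  then show ?thesis by (simp add: morse_cc_def)
qed

lemma grd_C:
  assumes "morse_decomposition K \<V> P le M" "\<sigma> \<in> K"
  shows "grd (morse_cc K P M) \<sigma> \<in> P \<and> \<sigma> \<in> M (grd (morse_cc K P M) \<sigma>)"
proof -
  obtain p where "p \<in> P" "\<sigma> \<in> M p" using md_facts(4)[OF assms] by blast
  then show ?thesis using grd_C_eq[OF assms(1)] by simp
qed

lemma okC: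
  assumes "morse_decomposition K \<V> P le M" "finite K"
  shows "\<forall>g\<in>gens (morse_cc K P M). grd (morse_cc K P M) g \<in> P \<and> finite (bdry (morse_cc K P M) g)"
  using grd_C[OF assms(1)] assms(2) by (simp add: morse_cc_def)

lemma okCb:
  assumes "is_fcc P le D"
  shows "\<forall>g\<in>gens D. grd D g \<in> P \<and> finite (bdry D g)"
  using assms by (simp add: is_fcc_def)

lemma prank_cong:
  assumes "deg D = deg E" "bdry D = bdry E"
  shows "prank D A B n = prank E A B n"
  unfolding prank_def cycles_def boundaries_def chains_def assms ..

lemma co_facts:
  assumes "compatible_order P le fP ps"
  shows "distinct ps" "set ps = P" "sorted (map fP ps)" "length ps = card P"
  using assms by (auto simp: compatible_order_def distinct_card[symmetric])

lemma set_take_nth: "set (take i ps) = {ps ! j | j. j < i \<and> j < length ps}"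
proof
  show "set (take i ps) \<subseteq> {ps ! j | j. j < i \<and> j < length ps}"
    by (auto simp: in_set_conv_nth) blast
  show "{ps ! j | j. j < i \<and> j < length ps} \<subseteq> set (take i ps)"
  proof
    fix x assume "x \<in> {ps ! j | j. j < i \<and> j < length ps}"
    then obtain j where j: "j < i" "j < length ps" "x = ps ! j" by blast
    then have "take i ps ! j = x" "j < length (take i ps)" by auto
    then show "x \<in> set (take i ps)" by (metis nth_mem)
  qed
qed

lemma stg_C:
  assumes "morse_decomposition K \<V> P le M" "compatible_order P le fP ps" "i \<le> length ps"
  shows "stg (morse_cc K P M) ps i = (\<Union>j<i. M (ps ! j))"
proof
  show "stg (morse_cc K P M) ps i \<subseteq> (\<Union>j<i. M (ps ! j))"
  proof
    fix \<sigma> assume s: "\<sigma> \<in> stg (morse_cc K P M) ps i"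
    then have sK: "\<sigma> \<in> K" and g: "grd (morse_cc K P M) \<sigma> \<in> set (take i ps)"
      by (auto simp: stg_def morse_cc_def)
    obtain j where j: "j < i" "j < length ps" "ps ! j = grd (morse_cc K P M) \<sigma>"
      using g set_take_nth[of i ps] by auto
    have "\<sigma> \<in> M (ps ! j)" using j(3) grd_C[OF assms(1) sK] by simp
    then show "\<sigma> \<in> (\<Union>j<i. M (ps ! j))" using j(1) by blast
  qed
next
  show "(\<Union>j<i. M (ps ! j)) \<subseteq> stg (morse_cc K P M) ps i"
  proof
    fix \<sigma> assume "\<sigma> \<in> (\<Union>j<i. M (ps ! j))"
    then obtain j where j: "j < i" "\<sigma> \<in> M (ps ! j)" by blast
    have jl: "j < length ps" using j assms(3) by simp
    have pP: "ps ! j \<in> P" using co_facts(2)[OF assms(2)] jl by auto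
    have sK: "\<sigma> \<in> K" using md_facts(2)[OF assms(1) pP] j by auto
    have "grd (morse_cc K P M) \<sigma> = ps ! j" using grd_C_eq[OF assms(1) pP j(2)] .
    then have "grd (morse_cc K P M) \<sigma> \<in> set (take i ps)" using set_take_nth[of i ps] j jl by auto
    then show "\<sigma> \<in> stg (morse_cc K P M) ps i" using sK by (simp add: stg_def morse_cc_def)
  qed
qed

lemma part1:
  assumes K: "simplicial_complex K" and md: "morse_decomposition K \<V> P le M"
    and co: "compatible_order P le fP ps"
    and cc: "conley_complex P le (morse_cc K P M) Cb"
  shows "pers_filtered Cb fP ps = pers_F K M fP ps"
proof
  fix n
  let ?C = "morse_cc K P M"
  let ?m = "length ps"
  have finK: "finite K" using K by (simp add: simplicial_complex_def)
  have okb: "\<forall>g\<in>gens Cb. grd Cb g \<in> P \<and> finite (bdry Cb g)"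
    using cc okCb by (auto simp: conley_complex_def)
  have eq: "fhtpy_equivalent le Cb ?C" using cc by (simp add: conley_complex_def)
  have e1: "(\<lambda>i. {g \<in> gens Cb. grd Cb g \<in> set (take i ps)}) = stg Cb ps"
    by (simp add: stg_def[abs_def])
  have "pers_filtered Cb fP ps n = PMR (RR Cb (stg Cb ps) ?m n) ?m (order_val fP ps)"
    unfolding pers_filtered_def e1 pm_PMR ..
  also have "\<dots> = PMR (RR (simplicial_cc K) (\<lambda>i. \<Union>j<i. M (ps ! j)) ?m n) ?m (order_val fP ps)"
  proof (rule PMR_cong)
    fix i j :: nat assume ij: "i \<le> j"
    show "RR Cb (stg Cb ps) ?m n i j = RR (simplicial_cc K) (\<lambda>i. \<Union>j<i. M (ps ! j)) ?m n i j"
    proof (cases "i = 0 \<or> ?m < j")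
      case True then show ?thesis by (simp add: RR_def)
    next
      case False
      have "prank Cb (stg Cb ps i) (stg Cb ps j) n = prank ?C (stg ?C ps i) (stg ?C ps j) n"
        by (rule conley_prank[OF okb okC[OF md finK] _ co eq ij]) (simp add: morse_cc_def finK)
      also have "\<dots> = prank (simplicial_cc K) (stg ?C ps i) (stg ?C ps j) n"
        by (rule prank_cong) (simp_all add: morse_cc_def simplicial_cc_def)
      also have "\<dots> = prank (simplicial_cc K) (\<Union>k<i. M (ps ! k)) (\<Union>k<j. M (ps ! k)) n"
        using stg_C[OF md co, of i] stg_C[OF md co, of j] False ij by simp
      finally show ?thesis using False by (simp add: RR_def)
    qed
  qed
  also have "\<dots> = pers_F K M fP ps n"
    unfolding pers_F_def pm_PMR ..
  finally show "pers_filtered Cb fP ps n = pers_F K M fP ps n" .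
qed

lemma map_eq:
  assumes "compatible_order P le fP ps" "compatible_order P le fP ps'"
  shows "map fP ps = map fP ps'"
proof -
  have "mset ps = mset ps'"
    using co_facts[OF assms(1)] co_facts[OF assms(2)] set_eq_iff_mset_eq_distinct by metis
  then have m: "mset (map fP ps) = mset (map fP ps')" by simp
  have "sort (map fP ps') = map fP ps" by (rule properties_for_sort[OF m co_facts(3)[OF assms(1)]])
  moreover have "sort (map fP ps') = map fP ps'" using co_facts(3)[OF assms(2)] by (simp add: sorted_sort_id)
  ultimately show ?thesis by simp
qed

lemma val_eq:
  assumes "compatible_order P le fP ps" "compatible_order P le fP ps'"
  shows "order_val fP ps = order_val fP ps'"
proof
  fix i
  have m: "map fP ps = map fP ps'" using map_eq[OF assms] .
  then have l: "length ps = length ps'" by (metis length_map)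
  have "fP (ps ! (i - 1)) = fP (ps' ! (i - 1))" if "1 \<le> i" "i \<le> length ps"
    using m that by (metis diff_less l le_trans less_one not_le nth_map)
  then show "order_val fP ps i = order_val fP ps' i" by (auto simp: order_val_def l)
qed

lemma val_mono:
  assumes "compatible_order P le fP ps" "1 \<le> i" "i \<le> j" "j \<le> length ps + 1"
  shows "order_val fP ps i \<le> order_val fP ps j"
proof (cases "j = length ps + 1")
  case True then show ?thesis by (simp add: order_val_def)
next
  case False
  then have j: "j \<le> length ps" using assms by simp
  have "(map fP ps) ! (i - 1) \<le> (map fP ps) ! (j - 1)"
    by (rule sorted_nth_mono[OF co_facts(3)[OF assms(1)]]) (use assms j in auto)
  then show ?thesis using assms j by (simp add: order_val_def)
qed

lemma take_char:
  assumes co: "compatible_order P le fP ps" and i: "1 \<le> i" "i \<le> length ps"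
    and g: "order_val fP ps i < order_val fP ps (Suc i)"
  shows "set (take i ps) = {p\<in>P. ereal (fP p) < order_val fP ps (Suc i)}"
proof
  show "set (take i ps) \<subseteq> {p\<in>P. ereal (fP p) < order_val fP ps (Suc i)}"
  proof
    fix p assume "p \<in> set (take i ps)"
    then obtain k where k: "k < i" "k < length ps" "p = ps ! k" using set_take_nth[of i ps] by auto
    have "order_val fP ps (Suc k) \<le> order_val fP ps i" using val_mono[OF co, of "Suc k" i] k i by simp
    moreover have "order_val fP ps (Suc k) = ereal (fP p)" using k by (simp add: order_val_def)
    moreover have "p \<in> P" using k co_facts(2)[OF co] by auto
    ultimately show "p \<in> {p\<in>P. ereal (fP p) < order_val fP ps (Suc i)}" using g by auto
  qed
  show "{p\<in>P. ereal (fP p) < order_val fP ps (Suc i)} \<subseteq> set (take i ps)"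
  proof
    fix p assume p: "p \<in> {p\<in>P. ereal (fP p) < order_val fP ps (Suc i)}"
    then obtain k where k: "k < length ps" "p = ps ! k" using co_facts(2)[OF co] by (auto simp: in_set_conv_nth)
    have "k < i"
    proof (rule ccontr)
      assume "\<not> k < i"
      then have "order_val fP ps (Suc i) \<le> order_val fP ps (Suc k)" using val_mono[OF co, of "Suc i" "Suc k"] k by simp
      moreover have "order_val fP ps (Suc k) = ereal (fP p)" using k by (simp add: order_val_def)
      ultimately show False using p by auto
    qed
    then show "p \<in> set (take i ps)" using set_take_nth[of i ps] k by auto
  qed
qed

lemma filt_eq:
  assumes "i \<le> length ps"
  shows "(\<Union>j<i. M (ps ! j)) = \<Union>(M ` set (take i ps))"
  using assms set_take_nth[of i ps] by auto (metis le_trans less_imp_le_nat not_le)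

lemma cycles_mono: "A \<subseteq> B \<Longrightarrow> cycles D A n \<subseteq> cycles D B n"
  by (auto simp: cycles_def chains_def)

lemma boundaries_mono: "A \<subseteq> B \<Longrightarrow> boundaries D A n \<subseteq> boundaries D B n"
  by (auto simp: boundaries_def chains_def)

lemma zsub_fin: "zsub {c. finite c}"
  by (auto simp: zsub_def finite_sdiff)

lemma qdim_zero_fin:
  assumes "zsub Z" shows "qdim Z {c. finite c} = 0"
proof -
  have "card S \<le> 0" if S: "indep_mod Z {c. finite c} S" for S
  proof (cases "S = {}")
    case False
    then obtain s where s: "s \<in> S" by blast
    then have "finite s" using S assms by (auto simp: indep_mod_def zsub_def)
    then have "zsum {s} \<in> {c. finite c}" by simp
    then show ?thesis using S s unfolding indep_mod_def by blast
  qed simp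
  then show ?thesis using qdim_least[of Z "{c. finite c}" 0] by simp
qed

lemma qdim_zero_empty:
  assumes "zsub W" shows "qdim (cycles D {} n) W = 0"
proof -
  have "card S \<le> 0" if S: "indep_mod (cycles D {} n) W S" for S
  proof (cases "S = {}")
    case False
    have "cycles D {} n \<subseteq> {{}}" by (auto simp: cycles_def chains_def)
    then have "S = {{}}" using S False by (auto simp: indep_mod_def)
    moreover have "zsum {{}} \<in> W" using assms by (simp add: zsub_def)
    ultimately show ?thesis using S unfolding indep_mod_def by blast
  qed simp
  then show ?thesis using qdim_least[of "cycles D {} n" W 0] by simp
qed

lemma nonneg:
  assumes K: "simplicial_complex K" and md: "morse_decomposition K \<V> P le M"
    and co: "compatible_order P le fP ps"
    and ab: "1 \<le> a" "a \<le> b" "b \<le> length ps"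
  shows "0 \<le> muR (RR (simplicial_cc K) (\<lambda>i. \<Union>j<i. M (ps ! j)) (length ps) n) a b"
proof -
  let ?sC = "simplicial_cc K" and ?m = "length ps"
  define F where "F i = (\<Union>j<i. M (ps ! j))" for i
  have finK: "finite K" using K by (simp add: simplicial_complex_def)
  have FK: "F i \<subseteq> K" if "i \<le> ?m" for i
  proof
    fix \<sigma> assume "\<sigma> \<in> F i"
    then obtain j where j: "j < i" "\<sigma> \<in> M (ps ! j)" by (auto simp: F_def)
    have "ps ! j \<in> P" using j that co_facts(2)[OF co] by auto
    then show "\<sigma> \<in> K" using md_facts(2)[OF md] j by auto
  qed
  have Fmono: "i \<le> j \<Longrightarrow> F i \<subseteq> F j" for i j unfolding F_def by (rule UN_mono) auto
  have F0: "F 0 = {}" by (simp add: F_def)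
  have fb: "\<forall>g\<in>B. finite (bdry ?sC g)" for B using finK by (simp add: simplicial_cc_def)
  define Z where "Z i = cycles ?sC (F i) n" for i
  define Wb where "Wb j = boundaries ?sC (F j) n" for j
  define W2 where "W2 = (if Suc b \<le> ?m then Wb (Suc b) else {c. finite c})"
  have zZ: "zsub (Z i)" for i by (simp add: Z_def cycles_zsub)
  have zW: "zsub (Wb j)" for j using boundaries_zsub[OF fb] by (simp add: Wb_def)
  have zW2: "zsub W2" by (simp add: W2_def zW zsub_fin)
  have RR_eq: "RR ?sC (\<lambda>i. \<Union>j<i. M (ps ! j)) ?m n i j = (if i = 0 \<or> ?m < j then 0 else int (qdim (Z i) (Wb j)))" for i j
    by (simp add: RR_def prank_def Z_def Wb_def F_def)
  have r1: "RR ?sC (\<lambda>i. \<Union>j<i. M (ps ! j)) ?m n a b = int (qdim (Z a) (Wb b))"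
    using ab by (simp add: RR_eq)
  have r2: "RR ?sC (\<lambda>i. \<Union>j<i. M (ps ! j)) ?m n (a - 1) b = int (qdim (Z (a - 1)) (Wb b))"
  proof (cases "a - 1 = 0")
    case True
    then have "qdim (Z (a - 1)) (Wb b) = 0" using qdim_zero_empty[OF zW] by (simp add: Z_def F0)
    then show ?thesis using True by (simp add: RR_eq)
  qed (use ab in \<open>simp add: RR_eq\<close>)
  have r3: "RR ?sC (\<lambda>i. \<Union>j<i. M (ps ! j)) ?m n a (b + 1) = int (qdim (Z a) W2)"
  proof (cases "Suc b \<le> ?m")
    case False
    then show ?thesis using qdim_zero_fin[OF zZ] by (simp add: RR_eq W2_def)
  qed (use ab in \<open>simp add: RR_eq W2_def\<close>)
  have r4: "RR ?sC (\<lambda>i. \<Union>j<i. M (ps ! j)) ?m n (a - 1) (b + 1) = int (qdim (Z (a - 1)) W2)"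
  proof (cases "Suc b \<le> ?m")
    case False
    then show ?thesis using qdim_zero_fin[OF zZ] by (simp add: RR_eq W2_def)
  next
    case True
    show ?thesis
    proof (cases "a - 1 = 0")
      case True
      then have "qdim (Z (a - 1)) W2 = 0" using qdim_zero_empty[OF zW2] by (simp add: Z_def F0)
      then show ?thesis using True by (simp add: RR_eq)
    qed (use True in \<open>simp add: RR_eq W2_def\<close>)
  qed
  have Z12: "Z (a - 1) \<subseteq> Z a" unfolding Z_def by (rule cycles_mono, rule Fmono) simp
  have W12: "Wb b \<subseteq> W2"
  proof (cases "Suc b \<le> ?m")
    case True
    then show ?thesis unfolding W2_def Wb_def using boundaries_mono[OF Fmono[of b "Suc b"]] by simp
  next
    case False
    then show ?thesis using zW[of b] by (auto simp: W2_def zsub_def)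
  qed
  have ZA: "\<forall>z\<in>Z a. z \<subseteq> K" using FK[of a] ab by (auto simp: Z_def cycles_def chains_def)
  have "qdim (Z (a - 1)) (Wb b) + qdim (Z a) W2 \<le> qdim (Z a) (Wb b) + qdim (Z (a - 1)) W2"
    by (rule qdim_ineq[OF zZ zZ Z12 zW zW2 W12 finK ZA])
  then show ?thesis unfolding muR_def r1 r2 r3 r4 by linarith
qed

lemma part2:
  assumes K: "simplicial_complex K" and md: "morse_decomposition K \<V> P le M"
    and co: "compatible_order P le fP ps" and co': "compatible_order P le fP ps'"
  shows "pers_F K M fP ps = pers_F K M fP ps'"
proof
  fix n
  let ?sC = "simplicial_cc K"
  define m where "m = length ps"
  have l': "length ps' = m" using co_facts(4)[OF co] co_facts(4)[OF co'] by (simp add: m_def)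
  define val where "val = order_val fP ps"
  have v': "order_val fP ps' = val" using val_eq[OF co co'] by (simp add: val_def)
  let ?R = "RR ?sC (\<lambda>i. \<Union>j<i. M (ps ! j)) m n" and ?R' = "RR ?sC (\<lambda>i. \<Union>j<i. M (ps' ! j)) m n"
  have "pers_F K M fP ps n = PMR ?R m val" by (simp add: pers_F_def pm_PMR m_def val_def)
  also have "\<dots> = PMR ?R' m val"
  proof (rule block_PMR)
    show "val i \<le> val j" if "1 \<le> i" "i \<le> j" "j \<le> m + 1" for i j
      using val_mono[OF co that(1,2)] that by (simp add: val_def m_def)
    show "val (m + 1) = \<infinity>" by (simp add: val_def order_val_def m_def)
    show "0 \<le> muR ?R a b" if "1 \<le> a" "a \<le> b" "b \<le> m" for a b
      using nonneg[OF K md co, of a b n] that by (simp add: m_def)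
    show "0 \<le> muR ?R' a b" if "1 \<le> a" "a \<le> b" "b \<le> m" for a b
      using nonneg[OF K md co', of a b n] that l' by simp
    have Feq: "(\<Union>j<i. M (ps ! j)) = (\<Union>j<i. M (ps' ! j))"
      if "i = 0 \<or> (1 \<le> i \<and> i \<le> m \<and> val i < val (Suc i))" for i
    proof (cases "i = 0")
      case False
      then have i: "1 \<le> i" "i \<le> m" "val i < val (Suc i)" using that by auto
      have "set (take i ps) = {p\<in>P. ereal (fP p) < val (Suc i)}"
        using take_char[OF co, of i] i by (simp add: val_def m_def)
      moreover have "set (take i ps') = {p\<in>P. ereal (fP p) < val (Suc i)}"
        using take_char[OF co', of i] i l' v' by simp
      ultimately show ?thesis using filt_eq[of i ps M] filt_eq[of i ps' M] i l' by (simp add: m_def)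
    qed simp
    show "?R i j = ?R' i j"
      if "i = 0 \<or> (1 \<le> i \<and> i \<le> m \<and> val i < val (Suc i))"
        "j = 0 \<or> m < j \<or> (1 \<le> j \<and> j \<le> m \<and> val j < val (Suc j))" for i j
    proof (cases "i = 0 \<or> m < j")
      case True then show ?thesis by (simp add: RR_def)
    next
      case False
      then have "j = 0 \<or> (1 \<le> j \<and> j \<le> m \<and> val j < val (Suc j))" using that(2) by auto
      then show ?thesis using Feq[OF that(1)] Feq[of j] by (simp add: RR_def)
    qed
  qed
  also have "\<dots> = pers_F K M fP ps' n" by (simp add: pers_F_def pm_PMR l' v'[symmetric])
  finally show "pers_F K M fP ps n = pers_F K M fP ps' n" .
qed

theorem theorem4:
  fixes K :: "'v set set" and \<V> :: "'v set set set"
    and P :: "'p set" and le :: "'p \<Rightarrow> 'p \<Rightarrow> bool" and M :: "'p \<Rightarrow> 'v set set"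
    and f :: "'v set \<Rightarrow> real" and fP :: "'p \<Rightarrow> real"
    and ps ps' :: "'p list"
    and Cb :: "('g, 'p) fcc" and Cb' :: "('h, 'p) fcc"
  assumes "simplicial_complex K"
    and "multivector_field K \<V>"
    and "morse_decomposition K \<V> P le M"
    and "lyapunov P le M f fP"
    and "compatible_order P le fP ps"
    and "compatible_order P le fP ps'"
    and "conley_complex P le (morse_cc K P M) Cb"
    and "conley_complex P le (morse_cc K P M) Cb'"
  shows "pers_filtered Cb fP ps = pers_F K M fP ps \<and>
         pers_F K M fP ps = pers_F K M fP ps' \<and>
         pers_F K M fP ps' = pers_filtered Cb' fP ps'"
  using part1[OF assms(1,3,5,7)] part2[OF assms(1,3,5,6)] part1[OF assms(1,3,6,8)] by simp


end
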